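(* Let $T$ be a tree of height $\omega$ and size $\aleph_1$, let $\mathcal{B}$ be a collection of infinite (cofinal) branches through $T$, and let $\theta$ be a sufficiently large regular cardinal. Then the following are equivalent: (1) $\mathcal{B}$ is stationary over $T$. (2) Either (a) there is a Cantor-subtree $S\subseteq T$, or (b) for every bijection $e:\omega_1\to T$, identifying nodes with countable ordinals via $e$, the set $E_\mathcal{B}=\{\alpha<\omega_1:\sup(b)=\alpha\text{ for some }b\in\mathcal{B}\}$ is stationary in $\omega_1$ (where $\sup(b)=\sup\{e^{-1}(x):x\in b\}$). (3) The set $\mathcal{N}(T,\mathcal{B})$ is stationary in $[H_\theta]^{\aleph_0}$.
   Context: A collection $\mathcal{B}$ of cofinal branches through a tree $T$ is non-stationary over $T$ if there is a function $f:\mathcal{B}\to T$ with $f(b)\in b$ for all $b\in\mathcal{B}$ such that for distinct $b,b'\in\mathcal{B}$, $f(b)\notin b'$ or $f(b')\notin b$ (i.e. $f(b)$ or $f(b')$ is strictly above $b\cap b'$); otherwise $\mathcal{B}$ is stationary over $T$. For $S\subseteq T$ let $\overline{S}=\{b\in\mathcal{B}: b\cap S\text{ is infinite}\}$; $S$ is a Cantor-subtree of $T$ if $S$ is countable and $\overline{S}$ is uncountable. $\mathcal{N}(T,\mathcal{B})$ is the set of $N\in[H_\theta]^{\aleph_0}$ such that there is $b\in\mathcal{B}$ with $b\subseteq N$ but $b\notin N$. *)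

theory Defs
  imports Main "HOL-Library.Countable_Set"
begin

definition preds :: "'a set \<Rightarrow> ('a \<Rightarrow> 'a \<Rightarrow> bool) \<Rightarrow> 'a \<Rightarrow> 'a set" where
  "preds T lt t = {s \<in> T. lt s t}"

definition is_tree :: "'a set \<Rightarrow> ('a \<Rightarrow> 'a \<Rightarrow> bool) \<Rightarrow> bool" where
  "is_tree T lt \<longleftrightarrow>
     (\<forall>t\<in>T. \<not> lt t t) \<and>
     (\<forall>r\<in>T. \<forall>s\<in>T. \<forall>t\<in>T. lt r s \<longrightarrow> lt s t \<longrightarrow> lt r t) \<and>
     (\<forall>t\<in>T. \<forall>r\<in>preds T lt t. \<forall>s\<in>preds T lt t. lt r s \<or> r = s \<or> lt s r)"

definition height_omega :: "'a set \<Rightarrow> ('a \<Rightarrow> 'a \<Rightarrow> bool) \<Rightarrow> bool" where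
  "height_omega T lt \<longleftrightarrow>
     (\<forall>t\<in>T. finite (preds T lt t)) \<and> (\<forall>n::nat. \<exists>t\<in>T. card (preds T lt t) = n)"

definition lin_chain :: "'a set \<Rightarrow> ('a \<Rightarrow> 'a \<Rightarrow> bool) \<Rightarrow> 'a set \<Rightarrow> bool" where
  "lin_chain T lt c \<longleftrightarrow> c \<subseteq> T \<and> (\<forall>r\<in>c. \<forall>s\<in>c. lt r s \<or> r = s \<or> lt s r)"

definition cofinal_branch :: "'a set \<Rightarrow> ('a \<Rightarrow> 'a \<Rightarrow> bool) \<Rightarrow> 'a set \<Rightarrow> bool" where
  "cofinal_branch T lt b \<longleftrightarrow>
     lin_chain T lt b \<and> (\<forall>c. lin_chain T lt c \<longrightarrow> b \<subseteq> c \<longrightarrow> c = b) \<and>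
     (\<forall>n::nat. \<exists>t\<in>b. card (preds T lt t) = n)"

definition nonstationary_over :: "'a set \<Rightarrow> ('a \<Rightarrow> 'a \<Rightarrow> bool) \<Rightarrow> 'a set set \<Rightarrow> bool" where
  "nonstationary_over T lt B \<longleftrightarrow>
     (\<exists>f. (\<forall>b\<in>B. f b \<in> b) \<and>
          (\<forall>b\<in>B. \<forall>b'\<in>B. b \<noteq> b' \<longrightarrow> f b \<notin> b' \<or> f b' \<notin> b))"

definition stationary_over :: "'a set \<Rightarrow> ('a \<Rightarrow> 'a \<Rightarrow> bool) \<Rightarrow> 'a set set \<Rightarrow> bool" where
  "stationary_over T lt B \<longleftrightarrow> \<not> nonstationary_over T lt B"

definition closure_B :: "'a set set \<Rightarrow> 'a set \<Rightarrow> 'a set set" where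
  "closure_B B S = {b \<in> B. infinite (b \<inter> S)}"

definition cantor_subtree :: "'a set \<Rightarrow> 'a set set \<Rightarrow> 'a set \<Rightarrow> bool" where
  "cantor_subtree T B S \<longleftrightarrow> S \<subseteq> T \<and> countable S \<and> uncountable (closure_B B S)"

text \<open>omega_1 is represented by the well-order cardSuc natLeq (successor cardinal of
aleph_0); its field is the set of countable ordinals, and (a,b) in w1 means a <= b.\<close>

abbreviation w1 :: "nat set rel" where
  "w1 \<equiv> cardSuc natLeq"

definition w1_sup :: "nat set set \<Rightarrow> nat set \<Rightarrow> bool" where
  "w1_sup A a \<longleftrightarrow> a \<in> Field w1 \<and> (\<forall>x\<in>A. (x, a) \<in> w1) \<and>
     (\<forall>c\<in>Field w1. (\<forall>x\<in>A. (x, c) \<in> w1) \<longrightarrow> (a, c) \<in> w1)"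

definition w1_club :: "nat set set \<Rightarrow> bool" where
  "w1_club C \<longleftrightarrow> C \<subseteq> Field w1 \<and>
     (\<forall>a\<in>Field w1. \<exists>c\<in>C. (a, c) \<in> w1 \<and> a \<noteq> c) \<and>
     (\<forall>A. A \<subseteq> C \<longrightarrow> A \<noteq> {} \<longrightarrow> (\<forall>a. w1_sup A a \<longrightarrow> a \<in> C))"

definition w1_stationary :: "nat set set \<Rightarrow> bool" where
  "w1_stationary E \<longleftrightarrow> E \<subseteq> Field w1 \<and> (\<forall>C. w1_club C \<longrightarrow> C \<inter> E \<noteq> {})"

definition E_set :: "(nat set \<Rightarrow> 'a) \<Rightarrow> 'a set set \<Rightarrow> nat set set" where
  "E_set e B = {a \<in> Field w1. \<exists>b\<in>B. w1_sup (inv_into (Field w1) e ` b) a}"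

definition ctbl_subsets :: "'h set \<Rightarrow> 'h set set" where
  "ctbl_subsets X = {N. N \<subseteq> X \<and> countable N \<and> infinite N}"

definition club_ctbl :: "'h set \<Rightarrow> 'h set set \<Rightarrow> bool" where
  "club_ctbl X C \<longleftrightarrow> C \<subseteq> ctbl_subsets X \<and>
     (\<forall>x\<in>ctbl_subsets X. \<exists>y\<in>C. x \<subseteq> y) \<and>
     (\<forall>ch. ch \<subseteq> C \<longrightarrow> ch \<noteq> {} \<longrightarrow> countable ch \<longrightarrow>
        (\<forall>u\<in>ch. \<forall>v\<in>ch. u \<subseteq> v \<or> v \<subseteq> u) \<longrightarrow> \<Union>ch \<in> C)"

definition stationary_ctbl :: "'h set \<Rightarrow> 'h set set \<Rightarrow> bool" where
  "stationary_ctbl X S \<longleftrightarrow> S \<subseteq> ctbl_subsets X \<and> (\<forall>C. club_ctbl X C \<longrightarrow> C \<inter> S \<noteq> {})"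

text \<open>N(T,B): nodes are coded into X by node, branches by code.\<close>
definition N_set :: "'h set \<Rightarrow> ('a \<Rightarrow> 'h) \<Rightarrow> ('a set \<Rightarrow> 'h) \<Rightarrow> 'a set set \<Rightarrow> 'h set set" where
  "N_set X node code B =
     {N \<in> ctbl_subsets X. \<exists>b\<in>B. node ` b \<subseteq> N \<and> code b \<notin> N}"

end

theory Submission
  imports Defs "HOL-Library.Countable_Set_Type"
begin

unbundle cardinal_syntax

abbreviation lw :: "nat set \<Rightarrow> nat set \<Rightarrow> bool" where
  "lw a b \<equiv> (a,b) \<in> w1 \<and> a \<noteq> b"

lemma w1_Card: "Card_order w1"
  by (simp add: cardSuc_Card_order natLeq_Card_order)

lemma w1_WO: "Well_order w1"
  using w1_Card card_order_on_well_order_on by blast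

lemma w1_wo: "wo_rel w1"
  using w1_WO wo_rel_def by blast

lemma w1_total: "a \<in> Field w1 \<Longrightarrow> b \<in> Field w1 \<Longrightarrow> (a,b) \<in> w1 \<or> (b,a) \<in> w1"
  using wo_rel.TOTALS[OF w1_wo] by blast

lemma w1_refl: "a \<in> Field w1 \<Longrightarrow> (a,a) \<in> w1"
  using wo_rel.REFL[OF w1_wo] by (simp add: refl_on_def)

lemma w1_trans: "(a,b) \<in> w1 \<Longrightarrow> (b,c) \<in> w1 \<Longrightarrow> (a,c) \<in> w1"
  using wo_rel.TRANS[OF w1_wo] by (meson transE)

lemma w1_antisym: "(a,b) \<in> w1 \<Longrightarrow> (b,a) \<in> w1 \<Longrightarrow> a = b"
  using wo_rel.ANTISYM[OF w1_wo] by (meson antisymD)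

lemma w1_field: "(a,b) \<in> w1 \<Longrightarrow> a \<in> Field w1 \<and> b \<in> Field w1"
  by (simp add: FieldI1 FieldI2)

lemma w1_not_le: "a \<in> Field w1 \<Longrightarrow> b \<in> Field w1 \<Longrightarrow> (a,b) \<notin> w1 \<longleftrightarrow> lw b a"
  by (metis w1_total w1_antisym w1_refl)

lemma w1_lt_le_trans: "lw a b \<Longrightarrow> (b,c) \<in> w1 \<Longrightarrow> lw a c"
  by (metis w1_trans w1_antisym)

lemma w1_le_lt_trans: "(a,b) \<in> w1 \<Longrightarrow> lw b c \<Longrightarrow> lw a c"
  by (metis w1_trans w1_antisym)

lemma w1_underS_countable: "a \<in> Field w1 \<Longrightarrow> countable {b. lw b a}"
proof -
  assume a: "a \<in> Field w1"
  have "|underS w1 a| <o w1" using card_of_underS[OF w1_Card a] .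
  hence "|underS w1 a| \<le>o natLeq"
    using cardSuc_ordLeq_ordLess[OF natLeq_Card_order card_of_Card_order] by blast
  hence "countable (underS w1 a)" using countable_card_le_natLeq by blast
  moreover have "underS w1 a = {b. lw b a}" unfolding underS_def by blast
  ultimately show ?thesis by simp
qed

lemma w1_uncountable: "uncountable (Field w1)"
proof
  assume "countable (Field w1)"
  hence "|Field w1| \<le>o natLeq" using countable_card_le_natLeq by blast
  moreover have "|Field w1| =o w1" using card_of_Field_ordIso[OF w1_Card] .
  moreover have "natLeq <o w1" using cardSuc_greater[OF natLeq_Card_order] .
  ultimately have "w1 \<le>o natLeq" using ordIso_symmetric ordIso_ordLeq_trans by blast
  hence "natLeq <o natLeq" using \<open>natLeq <o w1\<close> ordLess_ordLeq_trans by blast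
  thus False using ordLess_irreflexive by blast
qed

lemma w1_succ: "a \<in> Field w1 \<Longrightarrow> \<exists>b\<in>Field w1. lw a b"
proof (rule ccontr)
  assume a: "a \<in> Field w1" and n: "\<not> (\<exists>b\<in>Field w1. lw a b)"
  have "Field w1 \<subseteq> insert a {b. lw b a}"
    using n w1_total[OF a] by blast
  hence "countable (Field w1)" using w1_underS_countable[OF a]
    by (meson countable_insert countable_subset)
  thus False using w1_uncountable by blast
qed

lemma w1_bound: "countable A \<Longrightarrow> A \<subseteq> Field w1 \<Longrightarrow> \<exists>u\<in>Field w1. \<forall>x\<in>A. lw x u"
proof (rule ccontr)
  assume A: "countable A" "A \<subseteq> Field w1" and n: "\<not> (\<exists>u\<in>Field w1. \<forall>x\<in>A. lw x u)"
  have "cofinal A w1" unfolding cofinal_def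
  proof
    fix a assume a: "a \<in> Field w1"
    obtain a' where a': "a' \<in> Field w1" "lw a a'" using w1_succ[OF a] by blast
    obtain x where x: "x \<in> A" "\<not> lw x a'" using n a'(1) by blast
    have xF: "x \<in> Field w1" using x(1) A(2) by blast
    have "(a', x) \<in> w1" using w1_not_le[OF a'(1) xF] x(2) w1_total[OF a'(1) xF] by blast
    hence "lw a x" using a'(2) w1_lt_le_trans by blast
    thus "\<exists>b\<in>A. a \<noteq> b \<and> (a, b) \<in> w1" using x(1) by blast
  qed
  have reg: "regularCard w1" using regularCard_cardSuc[OF natLeq_Cinfinite] .
  have "|A| =o w1" using reg A(2) \<open>cofinal A w1\<close> unfolding regularCard_def by blast
  moreover have "|A| \<le>o natLeq" using A(1) countable_card_le_natLeq by blast
  moreover have "natLeq <o w1" using cardSuc_greater[OF natLeq_Card_order] .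
  ultimately have "|A| <o w1" using ordLeq_ordLess_trans by blast
  thus False using \<open>|A| =o w1\<close> not_ordLess_ordIso by blast
qed

lemma w1_min: "P a \<Longrightarrow> a \<in> Field w1 \<Longrightarrow> \<exists>c\<in>Field w1. P c \<and> (\<forall>d\<in>Field w1. P d \<longrightarrow> (c,d) \<in> w1)"
proof -
  assume "P a" "a \<in> Field w1"
  then obtain c where c: "c \<in> {x\<in>Field w1. P x}" "\<And>y. (y,c) \<in> w1 - Id \<Longrightarrow> y \<notin> {x\<in>Field w1. P x}"
    using wfE_min[OF wo_rel.WF[OF w1_wo], of a "{x\<in>Field w1. P x}"] by blast
  show ?thesis
  proof (intro bexI[of _ c] conjI ballI impI)
    fix d assume "d \<in> Field w1" "P d"
    thus "(c,d) \<in> w1" using c w1_total[of c d] by auto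
  qed (use c in auto)
qed

lemma w1_sup_ex: "A \<subseteq> Field w1 \<Longrightarrow> u \<in> Field w1 \<Longrightarrow> \<forall>x\<in>A. (x,u) \<in> w1 \<Longrightarrow> \<exists>s. w1_sup A s"
  using w1_min[of "\<lambda>c. \<forall>x\<in>A. (x,c) \<in> w1" u] unfolding w1_sup_def by blast

lemma w1_sup_le: "w1_sup A s \<Longrightarrow> x \<in> A \<Longrightarrow> (x,s) \<in> w1"
  unfolding w1_sup_def by blast

lemma w1_sup_least: "w1_sup A s \<Longrightarrow> c \<in> Field w1 \<Longrightarrow> \<forall>x\<in>A. (x,c) \<in> w1 \<Longrightarrow> (s,c) \<in> w1"
  unfolding w1_sup_def by blast

lemma w1_sup_Field: "w1_sup A s \<Longrightarrow> s \<in> Field w1"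
  unfolding w1_sup_def by blast

lemma w1_sup_below: "w1_sup A s \<Longrightarrow> lw b s \<Longrightarrow> \<exists>x\<in>A. lw b x"
proof (rule ccontr)
  assume s: "w1_sup A s" and b: "lw b s" and n: "\<not> (\<exists>x\<in>A. lw b x)"
  have bF: "b \<in> Field w1" using b w1_field by blast
  have "\<forall>x\<in>A. (x,b) \<in> w1"
  proof
    fix x assume x: "x \<in> A"
    have "x \<in> Field w1" using w1_sup_le[OF s x] w1_field by blast
    thus "(x,b) \<in> w1" using n x w1_not_le bF w1_refl by metis
  qed
  hence "(s,b) \<in> w1" using w1_sup_least[OF s bF] by blast
  thus False using b w1_antisym by blast
qed

lemma club_closure:
  assumes hF: "\<forall>\<beta>\<in>Field w1. h \<beta> \<in> Field w1"
  shows "w1_club {\<gamma>\<in>Field w1. \<forall>\<beta>. lw \<beta> \<gamma> \<longrightarrow> lw (h \<beta>) \<gamma>}" (is "w1_club ?C")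
  unfolding w1_club_def
proof (intro conjI allI impI ballI)
  show "?C \<subseteq> Field w1" by blast
next
  fix \<alpha> assume \<alpha>: "\<alpha> \<in> Field w1"
  define nx where "nx x = (SOME u. u \<in> Field w1 \<and> lw x u \<and> (\<forall>\<beta>. lw \<beta> x \<longrightarrow> lw (h \<beta>) u))" for x
  have nx: "nx x \<in> Field w1 \<and> lw x (nx x) \<and> (\<forall>\<beta>. lw \<beta> x \<longrightarrow> lw (h \<beta>) (nx x))" if x: "x \<in> Field w1" for x
  proof -
    have "countable (insert x (h ` {\<beta>. lw \<beta> x}))" using w1_underS_countable[OF x] by blast
    moreover have "insert x (h ` {\<beta>. lw \<beta> x}) \<subseteq> Field w1" using x hF w1_field by blast
    ultimately obtain u where "u \<in> Field w1" "\<forall>y\<in>insert x (h ` {\<beta>. lw \<beta> x}). lw y u"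
      using w1_bound by meson
    hence "\<exists>u. u \<in> Field w1 \<and> lw x u \<and> (\<forall>\<beta>. lw \<beta> x \<longrightarrow> lw (h \<beta>) u)" by blast
    thus ?thesis unfolding nx_def by (rule someI_ex)
  qed
  define a where "a n = (nx ^^ n) (nx \<alpha>)" for n
  have aS: "a (Suc n) = nx (a n)" for n by (simp add: a_def)
  have aF: "a n \<in> Field w1" for n
  proof (induct n)
    case 0 thus ?case using nx[OF \<alpha>] by (simp add: a_def)
  next
    case (Suc n) thus ?case using nx[OF Suc] aS by simp
  qed
  have cntr: "countable (range a)" by simp
  have raF: "range a \<subseteq> Field w1" using aF by blast
  obtain u where u: "u \<in> Field w1" "\<forall>y\<in>range a. lw y u"
    using w1_bound[OF cntr raF] by blast
  obtain s where s: "w1_sup (range a) s" using w1_sup_ex[OF raF u(1)] u(2) by blast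
  have sF: "s \<in> Field w1" using w1_sup_Field[OF s] .
  have "s \<in> ?C"
  proof (rule CollectI, rule conjI[OF sF], intro allI impI)
    fix \<beta> assume "lw \<beta> s"
    then obtain n where "lw \<beta> (a n)" using w1_sup_below[OF s] by blast
    hence "lw (h \<beta>) (a (Suc n))" using nx[OF aF[of n]] aS by simp
    moreover have "(a (Suc n), s) \<in> w1" using w1_sup_le[OF s] by blast
    ultimately show "lw (h \<beta>) s" using w1_lt_le_trans by blast
  qed
  moreover have "lw \<alpha> s"
  proof -
    have "lw \<alpha> (a 0)" using nx[OF \<alpha>] by (simp add: a_def)
    moreover have "(a 0, s) \<in> w1" using w1_sup_le[OF s] by blast
    ultimately show ?thesis using w1_lt_le_trans by blast
  qed
  ultimately show "\<exists>c\<in>?C. (\<alpha>, c) \<in> w1 \<and> \<alpha> \<noteq> c" by blast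
next
  fix A a assume A: "A \<subseteq> ?C" "A \<noteq> {}" and s: "w1_sup A a"
  show "a \<in> ?C"
  proof (rule CollectI, rule conjI[OF w1_sup_Field[OF s]], intro allI impI)
    fix \<beta> assume "lw \<beta> a"
    then obtain d where d: "d \<in> A" "lw \<beta> d" using w1_sup_below[OF s] by blast
    hence "lw (h \<beta>) d" using A by blast
    thus "lw (h \<beta>) a" using w1_sup_le[OF s d(1)] w1_lt_le_trans by blast
  qed
qed

lemma club_sub: "w1_club C \<Longrightarrow> C \<subseteq> Field w1"
  unfolding w1_club_def by (elim conjE)
lemma club_unb: "w1_club C \<Longrightarrow> a \<in> Field w1 \<Longrightarrow> \<exists>c\<in>C. lw a c"
  unfolding w1_club_def by (elim conjE) (erule bspec)
lemma club_closed: "w1_club C \<Longrightarrow> A \<subseteq> C \<Longrightarrow> A \<noteq> {} \<Longrightarrow> w1_sup A a \<Longrightarrow> a \<in> C"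
  unfolding w1_club_def by (elim conjE allE impE) 

lemma club_Int:
  assumes C: "w1_club C" and D: "w1_club D"
  shows "w1_club (C \<inter> D)"
  unfolding w1_club_def
proof (intro conjI allI impI ballI)
  show "C \<inter> D \<subseteq> Field w1" using club_sub[OF C] by blast
next
  fix A a assume A: "A \<subseteq> C \<inter> D" "A \<noteq> {}" "w1_sup A a"
  have "a \<in> C" using club_closed[OF C _ A(2,3)] A(1) by blast
  moreover have "a \<in> D" using club_closed[OF D _ A(2,3)] A(1) by blast
  ultimately show "a \<in> C \<inter> D" by blast
next
  fix \<alpha> assume \<alpha>: "\<alpha> \<in> Field w1"
  have CF: "C \<subseteq> Field w1" and DF: "D \<subseteq> Field w1" using club_sub C D by auto
  note Du = club_unb[OF D] and Cu = club_unb[OF C] and Dc = club_closed[OF D] and Cc = club_closed[OF C]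
  define g where "g x = (SOME d. d \<in> D \<and> lw x d)" for x
  define k where "k x = (SOME d. d \<in> C \<and> lw x d)" for x
  have Du: "\<forall>a\<in>Field w1. \<exists>c\<in>D. (a, c) \<in> w1 \<and> a \<noteq> c" using D unfolding w1_club_def by blast
  have Cu: "\<forall>a\<in>Field w1. \<exists>c\<in>C. (a, c) \<in> w1 \<and> a \<noteq> c" using C unfolding w1_club_def by blast
  have Dc: "\<And>A a. A \<subseteq> D \<Longrightarrow> A \<noteq> {} \<Longrightarrow> w1_sup A a \<Longrightarrow> a \<in> D" using D unfolding w1_club_def by blast
  have Cc: "\<And>A a. A \<subseteq> C \<Longrightarrow> A \<noteq> {} \<Longrightarrow> w1_sup A a \<Longrightarrow> a \<in> C" using C unfolding w1_club_def by blast
  have g: "g x \<in> D \<and> lw x (g x)" if "x \<in> Field w1" for x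
  proof -
    have "\<exists>d. d \<in> D \<and> lw x d" using club_unb[OF D that] by blast
    thus ?thesis unfolding g_def by (rule someI_ex)
  qed
  have k: "k x \<in> C \<and> lw x (k x)" if "x \<in> Field w1" for x
  proof -
    have "\<exists>d. d \<in> C \<and> lw x d" using club_unb[OF C that] by blast
    thus ?thesis unfolding k_def by (rule someI_ex)
  qed
  define c where "c n = ((k \<circ> g) ^^ n) (k \<alpha>)" for n
  have cC: "c n \<in> C" for n
  proof (induct n)
    case 0 thus ?case using k[OF \<alpha>] by (simp add: c_def)
  next
    case (Suc n)
    have cnF: "c n \<in> Field w1" using Suc CF by blast
    have "g (c n) \<in> D" using g[OF cnF] by blast
    hence "g (c n) \<in> Field w1" using DF by blast
    hence "k (g (c n)) \<in> C" using k by blast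
    thus ?case by (simp add: c_def)
  qed
  have cF: "c n \<in> Field w1" for n using cC CF by blast
  have cS: "c (Suc n) = k (g (c n))" for n by (simp add: c_def)
  have gD: "g (c n) \<in> D" for n using g cF by blast
  have lt1: "lw (c n) (g (c n))" for n using g cF by blast
  have lt2: "lw (g (c n)) (c (Suc n))" for n
  proof -
    have "g (c n) \<in> Field w1" using gD DF by blast
    thus ?thesis using k[of "g (c n)"] cS[of n] by simp
  qed
  have cntr: "countable (range c)" by simp
  have rcF: "range c \<subseteq> Field w1" using cF by blast
  obtain u where u: "u \<in> Field w1" "\<forall>y\<in>range c. lw y u"
    using w1_bound[OF cntr rcF] by blast
  obtain s where s: "w1_sup (range c) s" using w1_sup_ex[OF rcF u(1)] u(2) by blast
  have sF: "s \<in> Field w1" using w1_sup_Field[OF s] .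
  have "range c \<subseteq> C" using cC by blast
  hence sC: "s \<in> C" using Cc s by blast
  have "w1_sup (range (\<lambda>n. g (c n))) s"
    unfolding w1_sup_def
  proof (intro conjI ballI impI sF)
    fix x assume "x \<in> range (\<lambda>n. g (c n))"
    then obtain n where "x = g (c n)" by blast
    thus "(x, s) \<in> w1" using lt2[of n] w1_sup_le[OF s, of "c (Suc n)"] w1_trans by blast
  next
    fix d assume d: "d \<in> Field w1" "\<forall>x\<in>range (\<lambda>n. g (c n)). (x, d) \<in> w1"
    have "\<forall>x\<in>range c. (x,d) \<in> w1"
    proof
      fix x assume "x \<in> range c"
      then obtain n where "x = c n" by blast
      thus "(x,d) \<in> w1" using lt1[of n] d(2) w1_trans by blast
    qed
    thus "(s, d) \<in> w1" using w1_sup_least[OF s d(1)] by blast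
  qed
  moreover have "range (\<lambda>n. g (c n)) \<subseteq> D" using gD by blast
  ultimately have "s \<in> D" using Dc by blast
  moreover have "lw \<alpha> s"
  proof -
    have "lw \<alpha> (c 0)" using k[OF \<alpha>] by (simp add: c_def)
    moreover have "(c 0, s) \<in> w1" using w1_sup_le[OF s] by blast
    ultimately show ?thesis using w1_lt_le_trans by blast
  qed
  ultimately show "\<exists>c\<in>C \<inter> D. (\<alpha>, c) \<in> w1 \<and> \<alpha> \<noteq> c" using sC by blast
qed

locale trees =
  fixes T :: "'a set" and lt :: "'a \<Rightarrow> 'a \<Rightarrow> bool"
  assumes tree: "is_tree T lt" and height: "height_omega T lt"
begin

lemma inf_big: "infinite (S::nat set) \<Longrightarrow> \<exists>n\<in>S. n > k"
  using infinite_nat_iff_unbounded[of S] by auto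

definition lev :: "'a \<Rightarrow> nat" where "lev t = card (preds T lt t)"

lemma irr: "t \<in> T \<Longrightarrow> \<not> lt t t" using tree unfolding is_tree_def by blast
lemma trn: "r \<in> T \<Longrightarrow> s \<in> T \<Longrightarrow> t \<in> T \<Longrightarrow> lt r s \<Longrightarrow> lt s t \<Longrightarrow> lt r t"
  using tree unfolding is_tree_def by blast
lemma plin: "t \<in> T \<Longrightarrow> r \<in> T \<Longrightarrow> s \<in> T \<Longrightarrow> lt r t \<Longrightarrow> lt s t \<Longrightarrow> lt r s \<or> r = s \<or> lt s r"
  using tree unfolding is_tree_def preds_def by blast
lemma pfin: "t \<in> T \<Longrightarrow> finite (preds T lt t)" using height unfolding height_omega_def by blast

lemma lt_lev: assumes "s \<in> T" "t \<in> T" "lt s t" shows "lev s < lev t"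
proof -
  have "preds T lt s \<subseteq> preds T lt t" using assms trn unfolding preds_def by blast
  moreover have "s \<in> preds T lt t - preds T lt s" using assms irr unfolding preds_def by blast
  ultimately have "preds T lt s \<subset> preds T lt t" by blast
  thus ?thesis unfolding lev_def using pfin[OF assms(2)] by (simp add: psubset_card_mono)
qed

context fixes b assumes br: "cofinal_branch T lt b"
begin

lemma br_sub: "b \<subseteq> T" using br unfolding cofinal_branch_def lin_chain_def by blast
lemma br_lin: "x \<in> b \<Longrightarrow> y \<in> b \<Longrightarrow> lt x y \<or> x = y \<or> lt y x"
  using br unfolding cofinal_branch_def lin_chain_def by blast
lemma br_max: "lin_chain T lt c \<Longrightarrow> b \<subseteq> c \<Longrightarrow> c = b"
  using br unfolding cofinal_branch_def by blast
lemma br_levels: "\<exists>t\<in>b. lev t = n"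
  using br unfolding cofinal_branch_def lev_def by blast

lemma br_down: assumes x: "x \<in> b" and y: "y \<in> T" "lt y x" shows "y \<in> b"
proof -
  have xT: "x \<in> T" using x br_sub by blast
  have "lin_chain T lt (insert y b)"
    unfolding lin_chain_def
  proof (intro conjI ballI)
    show "insert y b \<subseteq> T" using br_sub y by blast
  next
    fix r s assume r: "r \<in> insert y b" and s: "s \<in> insert y b"
    have c: "lt y z \<or> y = z \<or> lt z y" if z: "z \<in> b" for z
    proof -
      have zT: "z \<in> T" using z br_sub by blast
      from br_lin[OF z x] show ?thesis
      proof (elim disjE)
        assume "lt z x" thus ?thesis using plin[OF xT y(1) zT y(2)] by blast
      next
        assume "z = x" thus ?thesis using y by blast
      next
        assume "lt x z" thus ?thesis using trn[OF y(1) xT zT y(2)] by blast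
      qed
    qed
    show "lt r s \<or> r = s \<or> lt s r"
      using r s c br_lin by blast
  qed
  hence "insert y b = b" using br_max by blast
  thus ?thesis by blast
qed

lemma br_lev_less: assumes "x \<in> b" "y \<in> b" "lev x < lev y" shows "lt x y"
proof -
  have "x \<in> T" "y \<in> T" using assms br_sub by auto
  thus ?thesis using br_lin[OF assms(1,2)] lt_lev assms(3) by fastforce
qed

lemma br_lev_inj: "inj_on lev b"
proof (rule inj_onI)
  fix x y assume "x \<in> b" "y \<in> b" "lev x = lev y"
  moreover have "x \<in> T" "y \<in> T" using calculation br_sub by auto
  ultimately show "x = y" using br_lin lt_lev by fastforce
qed

lemma br_countable: "countable b"
  unfolding countable_def using br_lev_inj by blast

lemma br_infinite: "infinite b"
proof
  assume "finite b"
  hence "finite (lev ` b)" by simp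
  moreover have "lev ` b = UNIV"
  proof -
    have "n \<in> lev ` b" for n using br_levels[of n] by blast
    thus ?thesis by blast
  qed
  ultimately show False by simp
qed

lemma br_above: assumes "x \<in> b" shows "\<exists>y\<in>b. lt x y"
proof -
  obtain y where y: "y \<in> b" "lev y = Suc (lev x)" using br_levels by blast
  have "lt x y" using br_lev_less[OF assms y(1)] y(2) by simp
  thus ?thesis using y(1) by blast
qed

lemma br_downset_finite:
  assumes P: "P \<subseteq> b" and dc: "\<forall>x\<in>P. \<forall>y\<in>b. lt y x \<longrightarrow> y \<in> P" and ne: "P \<noteq> b"
  shows "finite P"
proof (rule ccontr)
  assume inf: "infinite P"
  obtain z where z: "z \<in> b" "z \<notin> P" using P ne by blast
  have ij: "inj_on lev P" using inj_on_subset[OF br_lev_inj P] .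
  have "infinite (lev ` P)" using inf finite_imageD[OF _ ij] by blast
  then obtain m where m: "m \<in> lev ` P" "m > lev z"
    using inf_big by blast
  then obtain x where x: "x \<in> P" "lev x > lev z" by blast
  have "lt z x" using br_lev_less[OF z(1) _ x(2)] x(1) P by blast
  thus False using dc x(1) z by blast
qed

lemma br_sub_down: assumes "infinite (b \<inter> S)" shows "b \<subseteq> {t\<in>T. \<exists>s\<in>S. t = s \<or> lt t s}"
proof
  fix x assume x: "x \<in> b"
  have ij: "inj_on lev (b \<inter> S)" using inj_on_subset[OF br_lev_inj] by blast
  have "infinite (lev ` (b \<inter> S))" using assms finite_imageD[OF _ ij] by blast
  then obtain m where m: "m \<in> lev ` (b \<inter> S)" "m > lev x"
    using inf_big by blast
  then obtain s where s: "s \<in> b \<inter> S" "lev s > lev x" by blast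
  have "lt x s" using br_lev_less[OF x _ s(2)] s(1) by blast
  thus "x \<in> {t\<in>T. \<exists>s\<in>S. t = s \<or> lt t s}" using x br_sub s by blast
qed

end

lemma br_inter_finite:
  assumes b: "cofinal_branch T lt b" and b': "cofinal_branch T lt b'" and ne: "b \<noteq> b'"
  shows "finite (b \<inter> b')"
proof (rule br_downset_finite[OF b])
  show "b \<inter> b' \<subseteq> b" by blast
  show "\<forall>x\<in>b \<inter> b'. \<forall>y\<in>b. lt y x \<longrightarrow> y \<in> b \<inter> b'"
    using br_down[OF b'] br_sub[OF b] by blast
  show "b \<inter> b' \<noteq> b"
  proof
    assume "b \<inter> b' = b"
    hence "b \<subseteq> b'" by blast
    moreover have "lin_chain T lt b'" using b' unfolding cofinal_branch_def by blast
    ultimately have "b' = b" using br_max[OF b] by blast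
    thus False using ne by simp
  qed
qed

lemma down_countable: assumes "S \<subseteq> T" "countable S" shows "countable {t\<in>T. \<exists>s\<in>S. t = s \<or> lt t s}"
proof -
  have sub: "{t\<in>T. \<exists>s\<in>S. t = s \<or> lt t s} \<subseteq> S \<union> (\<Union>s\<in>S. preds T lt s)" unfolding preds_def by blast
  have cu: "countable (\<Union>s\<in>S. preds T lt s)"
  proof (rule countable_UN[OF assms(2)])
    fix s assume "s \<in> S"
    hence "finite (preds T lt s)" using pfin assms(1) by blast
    thus "countable (preds T lt s)" by (rule countable_finite)
  qed
  show ?thesis by (rule countable_subset[OF sub countable_Un[OF assms(2) cu]])
qed

end

context trees begin

lemma sep:
  fixes \<rho> :: "'a set \<Rightarrow> 'i" and less :: "'i \<Rightarrow> 'i \<Rightarrow> bool" and D :: "'i \<Rightarrow> 'a set"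
  assumes brs: "\<forall>b\<in>B. cofinal_branch T lt b"
    and comp: "\<forall>b\<in>B. \<forall>b'\<in>B. \<rho> b \<noteq> \<rho> b' \<longrightarrow> less (\<rho> b) (\<rho> b') \<or> less (\<rho> b') (\<rho> b)"
    and cnt: "\<forall>i. countable {b\<in>B. \<rho> b = i}"
    and inf: "\<forall>b\<in>B. infinite (b - D (\<rho> b))"
    and low: "\<forall>b\<in>B. \<forall>b'\<in>B. less (\<rho> b) (\<rho> b') \<longrightarrow> b \<subseteq> D (\<rho> b')"
  shows "nonstationary_over T lt B"
proof -
  define G where "G b = {b'\<in>B. \<rho> b' = \<rho> b}" for b
  define idx where "idx b = to_nat_on (G b) b" for b
  define E where "E b = {b''\<in>G b. idx b'' < idx b}" for b
  define f where "f b = (SOME x. x \<in> b - D (\<rho> b) \<and> (\<forall>b''\<in>E b. x \<notin> b''))" for b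
  have Gc: "countable (G b)" for b unfolding G_def using cnt by blast
  have Ginj: "inj_on (to_nat_on (G b)) (G b)" for b using inj_on_to_nat_on[OF Gc] .
  have Geq: "G b'' = G b" if "b'' \<in> G b" for b b'' using that unfolding G_def by auto
  have fprop: "f b \<in> b - D (\<rho> b) \<and> (\<forall>b''\<in>E b. f b \<notin> b'')" if b: "b \<in> B" for b
  proof -
    have bG: "b \<in> G b" using b unfolding G_def by blast
    have Esub: "to_nat_on (G b) ` E b \<subseteq> {..<idx b}"
    proof
      fix n assume "n \<in> to_nat_on (G b) ` E b"
      then obtain b'' where b'': "b'' \<in> E b" "n = to_nat_on (G b) b''" by blast
      hence "b'' \<in> G b" unfolding E_def by blast
      hence "idx b'' = n" using b'' Geq unfolding idx_def by simp
      thus "n \<in> {..<idx b}" using b'' unfolding E_def by simp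
    qed
    have "E b \<subseteq> G b" unfolding E_def by blast
    hence Einj: "inj_on (to_nat_on (G b)) (E b)" using inj_on_subset[OF Ginj] by blast
    have Efin: "finite (E b)"
    proof -
      have "finite (to_nat_on (G b) ` E b)" using finite_subset[OF Esub finite_lessThan] .
      thus ?thesis using finite_imageD[OF _ Einj] by blast
    qed
    have bT: "cofinal_branch T lt b" using brs b by blast
    have fin: "finite (\<Union>b''\<in>E b. b \<inter> b'')"
    proof (rule finite_UN_I[OF Efin])
      fix b'' assume b'': "b'' \<in> E b"
      hence b''B: "b'' \<in> B" and "idx b'' < idx b" unfolding E_def G_def by auto
      hence "b'' \<noteq> b" by blast
      moreover have "cofinal_branch T lt b''" using brs b''B by blast
      ultimately show "finite (b \<inter> b'')" using br_inter_finite[OF bT] by blast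
    qed
    have "infinite (b - D (\<rho> b) - (\<Union>b''\<in>E b. b \<inter> b''))"
      using Diff_infinite_finite[OF fin] inf b by blast
    from infinite_imp_nonempty[OF this] obtain x where "x \<in> b - D (\<rho> b) - (\<Union>b''\<in>E b. b \<inter> b'')"
      by blast
    hence "\<exists>x. x \<in> b - D (\<rho> b) \<and> (\<forall>b''\<in>E b. x \<notin> b'')" by blast
    thus ?thesis unfolding f_def by (rule someI_ex)
  qed
  show ?thesis unfolding nonstationary_over_def
  proof (intro exI[of _ f] conjI ballI impI)
    fix b assume "b \<in> B" thus "f b \<in> b" using fprop by blast
  next
    fix b b' assume b: "b \<in> B" and b': "b' \<in> B" and ne: "b \<noteq> b'"
    show "f b \<notin> b' \<or> f b' \<notin> b"
    proof (cases "\<rho> b = \<rho> b'")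
      case True
      hence G': "G b' = G b" unfolding G_def by simp
      have bG: "b \<in> G b" and b'G: "b' \<in> G b" using b b' True unfolding G_def by auto
      have "idx b \<noteq> idx b'" using inj_onD[OF Ginj _ bG b'G] ne G' unfolding idx_def by auto
      hence "idx b < idx b' \<or> idx b' < idx b" by arith
      thus ?thesis
      proof
        assume "idx b < idx b'"
        hence "b \<in> E b'" using bG G' unfolding E_def by simp
        thus ?thesis using fprop[OF b'] by blast
      next
        assume "idx b' < idx b"
        hence "b' \<in> E b" using b'G unfolding E_def by simp
        thus ?thesis using fprop[OF b] by blast
      qed
    next
      case False
      hence "less (\<rho> b) (\<rho> b') \<or> less (\<rho> b') (\<rho> b)" using comp b b' by blast
      thus ?thesis
      proof
        assume "less (\<rho> b) (\<rho> b')"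
        hence "b \<subseteq> D (\<rho> b')" using low b b' by blast
        thus ?thesis using fprop[OF b'] by blast
      next
        assume "less (\<rho> b') (\<rho> b)"
        hence "b' \<subseteq> D (\<rho> b)" using low b b' by blast
        thus ?thesis using fprop[OF b] by blast
      qed
    qed
  qed
qed

end

lemma countable_Union_h: "countable ch \<Longrightarrow> (\<And>u. u \<in> ch \<Longrightarrow> countable u) \<Longrightarrow> countable (\<Union>ch)"
  using countable_UN[of ch "\<lambda>u. u"] by simp

locale L4 = trees T lt for T :: "'a set" and lt +
  fixes B :: "'a set set" and node :: "'a \<Rightarrow> 'h" and code :: "'a set \<Rightarrow> 'h"
  assumes size: "ordIso2 (card_of T) (cardSuc natLeq)"
    and branches: "\<forall>b\<in>B. cofinal_branch T lt b"
    and node_inj: "inj_on node T"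
    and code_inj: "inj_on code B"
    and disj: "node ` T \<inter> code ` B = {}"
begin

lemma bB: "b \<in> B \<Longrightarrow> cofinal_branch T lt b" using branches by blast

lemma cantor_stat: assumes S: "cantor_subtree T B S" shows "stationary_over T lt B"
  unfolding stationary_over_def nonstationary_over_def
proof
  assume "\<exists>f. (\<forall>b\<in>B. f b \<in> b) \<and> (\<forall>b\<in>B. \<forall>b'\<in>B. b \<noteq> b' \<longrightarrow> f b \<notin> b' \<or> f b' \<notin> b)"
  then obtain f where f1: "\<forall>b\<in>B. f b \<in> b" and f2: "\<forall>b\<in>B. \<forall>b'\<in>B. b \<noteq> b' \<longrightarrow> f b \<notin> b' \<or> f b' \<notin> b"
    by blast
  let ?K = "closure_B B S"
  let ?D = "{t\<in>T. \<exists>s\<in>S. t = s \<or> lt t s}"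
  have ST: "S \<subseteq> T" "countable S" and unc: "uncountable ?K" using S unfolding cantor_subtree_def by auto
  have Dc: "countable ?D" using down_countable[OF ST] .
  have img: "f ` ?K \<subseteq> ?D"
  proof
    fix y assume "y \<in> f ` ?K"
    then obtain b where b: "b \<in> ?K" "y = f b" by blast
    hence bB': "b \<in> B" "infinite (b \<inter> S)" unfolding closure_B_def by auto
    have "b \<subseteq> ?D" using br_sub_down[OF bB[OF bB'(1)] bB'(2)] .
    thus "y \<in> ?D" using f1 bB'(1) b(2) by blast
  qed
  have "\<not> inj_on f ?K"
  proof
    assume "inj_on f ?K"
    moreover have "countable (f ` ?K)" using countable_subset[OF img Dc] .
    ultimately have "countable ?K" using countable_image_inj_on by blast
    thus False using unc by blast
  qed
  then obtain b b' where bb: "b \<in> ?K" "b' \<in> ?K" "b \<noteq> b'" "f b = f b'" unfolding inj_on_def by blast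
  hence "b \<in> B" "b' \<in> B" unfolding closure_B_def by auto
  thus False using f1 f2 bb by metis
qed

lemma nonstat_not_N:
  assumes ns: "nonstationary_over T lt B"
  shows "\<not> stationary_ctbl UNIV (N_set UNIV node code B)"
proof -
  obtain f where f1: "\<forall>b\<in>B. f b \<in> b" and f2: "\<forall>b\<in>B. \<forall>b'\<in>B. b \<noteq> b' \<longrightarrow> f b \<notin> b' \<or> f b' \<notin> b"
    using ns unfolding nonstationary_over_def by blast
  define G where "G y = (if \<exists>b\<in>B. y = node (f b) then code (SOME b. b \<in> B \<and> y = node (f b)) else y)" for y
  define Cf where "Cf = {N \<in> ctbl_subsets (UNIV::'h set). G ` N \<subseteq> N}"
  have fT: "f b \<in> T" if "b \<in> B" for b using f1 that br_sub[OF bB[OF that]] by blast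
  have Gb: "G (node (f b)) = code b" if b: "b \<in> B" for b
  proof -
    have ex: "\<exists>b'. b' \<in> B \<and> node (f b) = node (f b')" using b by blast
    define b' where "b' = (SOME b'. b' \<in> B \<and> node (f b) = node (f b'))"
    have b': "b' \<in> B" "node (f b) = node (f b')" using someI_ex[OF ex] unfolding b'_def by blast+
    have "f b = f b'" using inj_onD[OF node_inj b'(2) fT[OF b] fT[OF b'(1)]] .
    hence "b' = b" using f1 f2 b b'(1) by metis
    moreover have "G (node (f b)) = code b'" unfolding G_def b'_def using b by auto
    ultimately show ?thesis by simp
  qed
  have club: "club_ctbl UNIV Cf"
    unfolding club_ctbl_def
  proof (intro conjI allI impI ballI)
    show "Cf \<subseteq> ctbl_subsets UNIV" unfolding Cf_def by blast
  next
    fix x assume x: "x \<in> ctbl_subsets (UNIV::'h set)"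
    define y where "y = (\<Union>n. (G ^^ n) ` x)"
    have "countable y" unfolding y_def using x unfolding ctbl_subsets_def
      by (intro countable_UN) auto
    moreover have xy: "x \<subseteq> y" unfolding y_def by (metis (no_types, lifting) UN_upper UNIV_I funpow_0 image_id eq_id_iff)
    moreover have "infinite y" using xy x unfolding ctbl_subsets_def using finite_subset by blast
    moreover have "G ` y \<subseteq> y"
    proof
      fix z assume "z \<in> G ` y"
      then obtain n w where "w \<in> x" "z = G ((G ^^ n) w)" unfolding y_def by blast
      hence "z = (G ^^ Suc n) w" by simp
      thus "z \<in> y" using \<open>w \<in> x\<close> unfolding y_def by blast
    qed
    ultimately have "y \<in> Cf" unfolding Cf_def ctbl_subsets_def by blast
    thus "\<exists>y\<in>Cf. x \<subseteq> y" using xy by blast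
  next
    fix ch assume ch: "ch \<subseteq> Cf" "ch \<noteq> {}" "countable ch" "\<forall>u\<in>ch. \<forall>v\<in>ch. u \<subseteq> v \<or> v \<subseteq> u"
    have "countable (\<Union>ch)" using ch unfolding Cf_def ctbl_subsets_def by (intro countable_Union_h) auto
    moreover have "infinite (\<Union>ch)"
    proof
      assume "finite (\<Union>ch)"
      obtain u where "u \<in> ch" using ch(2) by blast
      hence "infinite u" using ch(1) unfolding Cf_def ctbl_subsets_def by blast
      moreover have "u \<subseteq> \<Union>ch" using \<open>u \<in> ch\<close> by blast
      ultimately show False using \<open>finite (\<Union>ch)\<close> finite_subset by blast
    qed
    moreover have "G ` (\<Union>ch) \<subseteq> \<Union>ch" using ch(1) unfolding Cf_def by blast
    ultimately show "\<Union>ch \<in> Cf" unfolding Cf_def ctbl_subsets_def by blast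
  qed
  have "Cf \<inter> N_set UNIV node code B = {}"
  proof (rule ccontr)
    assume "Cf \<inter> N_set UNIV node code B \<noteq> {}"
    then obtain N b where N: "N \<in> Cf" "b \<in> B" "node ` b \<subseteq> N" "code b \<notin> N"
      unfolding N_set_def by blast
    have "node (f b) \<in> N" using N(2,3) f1 by blast
    hence "G (node (f b)) \<in> N" using N(1) unfolding Cf_def by blast
    thus False using Gb[OF N(2)] N(4) by simp
  qed
  thus ?thesis unfolding stationary_ctbl_def using club by blast
qed

end

context L4 begin

lemma ex_e: "\<exists>e. bij_betw e (Field w1) T"
proof -
  have "|Field w1| =o w1" using card_of_Field_ordIso[OF w1_Card] .
  moreover have "w1 =o |T|" using ordIso_symmetric[OF size] .
  ultimately have "|Field w1| =o |T|" using ordIso_transitive by blast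
  thus ?thesis using card_of_ordIso by blast
qed

lemma T_unc: "uncountable T"
proof
  assume cT: "countable T"
  obtain e where e: "bij_betw e (Field w1) T" using ex_e by blast
  have "inj_on e (Field w1)" "e ` Field w1 = T" using e unfolding bij_betw_def by auto
  hence "countable (Field w1)" using cT countable_image_inj_on[of e "Field w1"] by simp
  thus False using w1_uncountable by blast
qed

lemma ex_Z: "\<exists>Z::'h set. countable Z \<and> infinite Z"
proof -
  have "infinite T" using T_unc countable_finite by blast
  then obtain g :: "nat \<Rightarrow> 'a" where g: "inj g" "range g \<subseteq> T" using infinite_countable_subset by blast
  have "inj_on node (range g)" using inj_on_subset[OF node_inj g(2)] .
  hence "inj (node \<circ> g)" using g(1) comp_inj_on by blast
  hence "infinite (range (node \<circ> g))" using finite_imageD[of "node \<circ> g" UNIV] by auto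
  moreover have "countable (range (node \<circ> g))" by simp
  ultimately show ?thesis by blast
qed

definition cl :: "'h set \<Rightarrow> 'h set" where
  "cl X = X \<union> node ` (\<Union>{b\<in>B. code b \<in> X}) \<union> node ` {y\<in>T. \<exists>x\<in>T. node x \<in> X \<and> lt y x}"

definition Fcl :: "'h set \<Rightarrow> bool" where
  "Fcl N \<longleftrightarrow> (\<forall>b\<in>B. code b \<in> N \<longrightarrow> node ` b \<subseteq> N) \<and> (\<forall>x\<in>T. node x \<in> N \<longrightarrow> (\<forall>y\<in>T. lt y x \<longrightarrow> node y \<in> N))"

lemma cl_countable: assumes X: "countable X" shows "countable (cl X)"
proof -
  have i1: "inj_on code {b\<in>B. code b \<in> X}" by (rule inj_on_subset[OF code_inj]) blast
  have "code ` {b\<in>B. code b \<in> X} \<subseteq> X" by blast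
  hence "countable (code ` {b\<in>B. code b \<in> X})" using countable_subset[OF _ X] by blast
  hence c1: "countable {b\<in>B. code b \<in> X}" using countable_image_inj_on[OF _ i1] by blast
  have c2: "countable (\<Union>{b\<in>B. code b \<in> X})"
  proof (rule countable_Union_h[OF c1])
    fix u assume "u \<in> {b\<in>B. code b \<in> X}"
    thus "countable u" using br_countable[OF bB] by blast
  qed
  have i2: "inj_on node {x\<in>T. node x \<in> X}" by (rule inj_on_subset[OF node_inj]) blast
  have "node ` {x\<in>T. node x \<in> X} \<subseteq> X" by blast
  hence "countable (node ` {x\<in>T. node x \<in> X})" using countable_subset[OF _ X] by blast
  hence c3: "countable {x\<in>T. node x \<in> X}" using countable_image_inj_on[OF _ i2] by blast
  have sub: "{y\<in>T. \<exists>x\<in>T. node x \<in> X \<and> lt y x} \<subseteq> (\<Union>x\<in>{x\<in>T. node x \<in> X}. preds T lt x)"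
    unfolding preds_def by blast
  have c4: "countable (\<Union>x\<in>{x\<in>T. node x \<in> X}. preds T lt x)"
  proof (rule countable_UN[OF c3])
    fix x assume "x \<in> {x\<in>T. node x \<in> X}"
    hence "finite (preds T lt x)" using pfin by blast
    thus "countable (preds T lt x)" by (rule countable_finite)
  qed
  have c5: "countable {y\<in>T. \<exists>x\<in>T. node x \<in> X \<and> lt y x}" using countable_subset[OF sub c4] .
  show ?thesis unfolding cl_def
    by (intro countable_Un X countable_image c2 c5)
qed

lemma cl_Fcl:
  assumes mono: "\<And>n. cl (M n) \<subseteq> M (Suc n)"
  shows "Fcl (\<Union>n. M n)"
  unfolding Fcl_def
proof (intro conjI ballI impI allI)
  fix b assume b: "b \<in> B" and "code b \<in> (\<Union>n. M n)"
  then obtain n where "code b \<in> M n" by blast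
  hence "node ` b \<subseteq> cl (M n)" using b unfolding cl_def by blast
  thus "node ` b \<subseteq> (\<Union>n. M n)" using mono[of n] by blast
next
  fix x y assume x: "x \<in> T" "node x \<in> (\<Union>n. M n)" and y: "y \<in> T" "lt y x"
  then obtain n where "node x \<in> M n" by blast
  hence "node y \<in> cl (M n)" using x y unfolding cl_def by blast
  thus "node y \<in> (\<Union>n. M n)" using mono[of n] by blast
qed

lemma Fcl_Union: "(\<And>M. M \<in> ch \<Longrightarrow> Fcl M) \<Longrightarrow> Fcl (\<Union>ch)"
  unfolding Fcl_def by blast

end

context L4 begin

context fixes C :: "'h set set"
  assumes Cclub: "club_ctbl UNIV C" and Cdis: "C \<inter> N_set UNIV node code B = {}"
begin

lemma C_ctbl: "N \<in> C \<Longrightarrow> countable N \<and> infinite N"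
proof -
  assume N: "N \<in> C"
  have "C \<subseteq> ctbl_subsets UNIV" using Cclub unfolding club_ctbl_def by (elim conjE)
  hence "N \<in> ctbl_subsets UNIV" using N by (rule subsetD)
  thus ?thesis unfolding ctbl_subsets_def by simp
qed

lemma C_unb: "countable X \<Longrightarrow> infinite X \<Longrightarrow> \<exists>M\<in>C. X \<subseteq> M"
proof -
  assume "countable X" "infinite X"
  hence X: "X \<in> ctbl_subsets UNIV" unfolding ctbl_subsets_def by simp
  have "\<forall>x\<in>ctbl_subsets UNIV. \<exists>y\<in>C. x \<subseteq> y" using Cclub unfolding club_ctbl_def by (elim conjE)
  thus ?thesis using X by (rule bspec)
qed

lemma C_chain: "ch \<subseteq> C \<Longrightarrow> ch \<noteq> {} \<Longrightarrow> countable ch \<Longrightarrow> (\<forall>u\<in>ch. \<forall>v\<in>ch. u \<subseteq> v \<or> v \<subseteq> u) \<Longrightarrow> \<Union>ch \<in> C"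
proof -
  assume a: "ch \<subseteq> C" "ch \<noteq> {}" "countable ch" "\<forall>u\<in>ch. \<forall>v\<in>ch. u \<subseteq> v \<or> v \<subseteq> u"
  have "\<forall>ch. ch \<subseteq> C \<longrightarrow> ch \<noteq> {} \<longrightarrow> countable ch \<longrightarrow>
        (\<forall>u\<in>ch. \<forall>v\<in>ch. u \<subseteq> v \<or> v \<subseteq> u) \<longrightarrow> \<Union>ch \<in> C"
    using Cclub unfolding club_ctbl_def by (elim conjE)
  thus ?thesis using a by simp
qed

lemma C_code: assumes "N \<in> C" "b \<in> B" "node ` b \<subseteq> N" shows "code b \<in> N"
proof (rule ccontr)
  assume "code b \<notin> N"
  moreover have "N \<in> ctbl_subsets UNIV" using C_ctbl[OF assms(1)] unfolding ctbl_subsets_def by blast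
  ultimately have "N \<in> N_set UNIV node code B" unfolding N_set_def using assms by blast
  thus False using Cdis assms(1) by blast
qed

lemma cl_sup: "X \<subseteq> cl X" unfolding cl_def by blast

lemma K1: assumes X: "countable X" shows "\<exists>M. M \<in> C \<and> Fcl M \<and> X \<subseteq> M"
proof -
  obtain Z :: "'h set" where Z: "countable Z" "infinite Z" using ex_Z by blast
  define st where "st M = (SOME M'. M' \<in> C \<and> cl M \<subseteq> M')" for M
  have st: "st M \<in> C \<and> cl M \<subseteq> st M" if M: "M \<in> C" for M
  proof -
    have "countable (cl M)" using cl_countable C_ctbl[OF M] by simp
    moreover have "infinite (cl M)" using C_ctbl[OF M] finite_subset[OF cl_sup[of M]] by blast
    ultimately have "\<exists>M'. M' \<in> C \<and> cl M \<subseteq> M'" using C_unb by blast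
    thus ?thesis unfolding st_def by (rule someI_ex)
  qed
  have "countable (X \<union> Z)" using X Z by simp
  moreover have "infinite (X \<union> Z)" using Z by simp
  ultimately obtain M0 where M0: "M0 \<in> C" "X \<union> Z \<subseteq> M0" using C_unb by blast
  define sq where "sq n = (st ^^ n) M0" for n
  have sqS: "sq (Suc n) = st (sq n)" for n unfolding sq_def by simp
  have sqC: "sq n \<in> C" for n
  proof (induct n)
    case 0 thus ?case using M0 unfolding sq_def by simp
  next
    case (Suc n) thus ?case using st sqS by simp
  qed
  have clS: "cl (sq n) \<subseteq> sq (Suc n)" for n using st[OF sqC[of n]] sqS[of n] by simp
  have incS: "sq n \<subseteq> sq (Suc n)" for n using clS[of n] cl_sup[of "sq n"] by blast
  have mono: "m \<le> n \<Longrightarrow> sq m \<subseteq> sq n" for m n by (rule lift_Suc_mono_le[of sq, OF incS])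
  have chain: "\<forall>u\<in>range sq. \<forall>v\<in>range sq. u \<subseteq> v \<or> v \<subseteq> u"
  proof (intro ballI)
    fix u v assume "u \<in> range sq" "v \<in> range sq"
    then obtain m n where "u = sq m" "v = sq n" by blast
    thus "u \<subseteq> v \<or> v \<subseteq> u" using mono[of m n] mono[of n m] by (cases "m \<le> n") auto
  qed
  have "range sq \<subseteq> C" using sqC by blast
  moreover have "range sq \<noteq> {}" by blast
  moreover have "countable (range sq)" by simp
  ultimately have UC: "\<Union>(range sq) \<in> C" using C_chain chain by blast
  have "Fcl (\<Union>n. sq n)" using cl_Fcl[of sq, OF clS] .
  moreover have "X \<subseteq> \<Union>(range sq)"
  proof -
    have "X \<subseteq> sq 0" using M0(2) unfolding sq_def by simp
    thus ?thesis by blast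
  qed
  ultimately show ?thesis using UC by blast
qed

end
end

context L4 begin

context fixes C :: "'h set set"
  assumes Cclub: "club_ctbl UNIV C" and Cdis: "C \<inter> N_set UNIV node code B = {}"
begin

lemma chain_ex:
  fixes e :: "nat set \<Rightarrow> 'a"
  shows "\<exists>Nf. \<forall>\<alpha>\<in>Field w1. Nf \<alpha> \<in> C \<and> Fcl (Nf \<alpha>) \<and> node (e \<alpha>) \<in> Nf \<alpha> \<and> (\<forall>\<gamma>. lw \<gamma> \<alpha> \<longrightarrow> Nf \<gamma> \<subseteq> Nf \<alpha>)"
proof -
  define H where "H F \<alpha> = (SOME M. M \<in> C \<and> Fcl M \<and> node (e \<alpha>) \<in> M \<and> (\<forall>\<gamma>. lw \<gamma> \<alpha> \<longrightarrow> F \<gamma> \<subseteq> M))"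
    for F :: "nat set \<Rightarrow> 'h set" and \<alpha>
  have adm: "wo_rel.adm_wo w1 H"
    unfolding wo_rel.adm_wo_def[OF w1_wo]
  proof (intro allI impI)
    fix f g :: "nat set \<Rightarrow> 'h set" and x
    assume eq: "\<forall>y\<in>underS w1 x. f y = g y"
    have "\<And>\<gamma>. lw \<gamma> x \<Longrightarrow> f \<gamma> = g \<gamma>" using eq unfolding underS_def by blast
    hence "(\<lambda>M. M \<in> C \<and> Fcl M \<and> node (e x) \<in> M \<and> (\<forall>\<gamma>. lw \<gamma> x \<longrightarrow> f \<gamma> \<subseteq> M))
         = (\<lambda>M. M \<in> C \<and> Fcl M \<and> node (e x) \<in> M \<and> (\<forall>\<gamma>. lw \<gamma> x \<longrightarrow> g \<gamma> \<subseteq> M))"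
      by (intro ext) metis
    thus "H f x = H g x" unfolding H_def by simp
  qed
  define Nf where "Nf = wo_rel.worec w1 H"
  have fixp: "Nf = H Nf" unfolding Nf_def using wo_rel.worec_fixpoint[OF w1_wo adm] .
  have P: "\<alpha> \<in> Field w1 \<longrightarrow> Nf \<alpha> \<in> C \<and> Fcl (Nf \<alpha>) \<and> node (e \<alpha>) \<in> Nf \<alpha> \<and> (\<forall>\<gamma>. lw \<gamma> \<alpha> \<longrightarrow> Nf \<gamma> \<subseteq> Nf \<alpha>)" for \<alpha>
  proof (induct \<alpha> rule: wo_rel.well_order_induct[OF w1_wo])
    case (1 \<alpha>)
    show ?case
    proof
      assume \<alpha>: "\<alpha> \<in> Field w1"
      have IH: "Nf \<gamma> \<in> C" if "lw \<gamma> \<alpha>" for \<gamma>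
      proof -
        have "\<gamma> \<in> Field w1" using that w1_field by blast
        thus ?thesis using 1 that by blast
      qed
      define X where "X = insert (node (e \<alpha>)) (\<Union>\<gamma>\<in>{\<gamma>. lw \<gamma> \<alpha>}. Nf \<gamma>)"
      have "countable (\<Union>\<gamma>\<in>{\<gamma>. lw \<gamma> \<alpha>}. Nf \<gamma>)"
      proof (rule countable_UN[OF w1_underS_countable[OF \<alpha>]])
        fix \<gamma> assume "\<gamma> \<in> {\<gamma>. lw \<gamma> \<alpha>}"
        hence "Nf \<gamma> \<in> C" using IH by blast
        thus "countable (Nf \<gamma>)" using C_ctbl[OF Cclub Cdis] by blast
      qed
      hence "countable X" unfolding X_def by simp
      then obtain M where M: "M \<in> C" "Fcl M" "X \<subseteq> M" using K1[OF Cclub Cdis] by blast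
      have "\<exists>M. M \<in> C \<and> Fcl M \<and> node (e \<alpha>) \<in> M \<and> (\<forall>\<gamma>. lw \<gamma> \<alpha> \<longrightarrow> Nf \<gamma> \<subseteq> M)"
        using M unfolding X_def by blast
      hence "H Nf \<alpha> \<in> C \<and> Fcl (H Nf \<alpha>) \<and> node (e \<alpha>) \<in> H Nf \<alpha> \<and> (\<forall>\<gamma>. lw \<gamma> \<alpha> \<longrightarrow> Nf \<gamma> \<subseteq> H Nf \<alpha>)"
        unfolding H_def by (rule someI_ex)
      thus "Nf \<alpha> \<in> C \<and> Fcl (Nf \<alpha>) \<and> node (e \<alpha>) \<in> Nf \<alpha> \<and> (\<forall>\<gamma>. lw \<gamma> \<alpha> \<longrightarrow> Nf \<gamma> \<subseteq> Nf \<alpha>)"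
        using fixp by metis
    qed
  qed
  show ?thesis using P by blast
qed

end
end

context L4 begin

lemma e_props: assumes e: "bij_betw e (Field w1) T"
  shows "\<And>x. x \<in> T \<Longrightarrow> inv_into (Field w1) e x \<in> Field w1 \<and> e (inv_into (Field w1) e x) = x"
    and "\<And>\<alpha>. \<alpha> \<in> Field w1 \<Longrightarrow> inv_into (Field w1) e (e \<alpha>) = \<alpha> \<and> e \<alpha> \<in> T"
proof -
  fix x assume x: "x \<in> T"
  show "inv_into (Field w1) e x \<in> Field w1 \<and> e (inv_into (Field w1) e x) = x"
  proof
    have "e ` Field w1 = T" using e unfolding bij_betw_def by blast
    hence xi: "x \<in> e ` Field w1" using x by simp
    show "inv_into (Field w1) e x \<in> Field w1" by (rule inv_into_into[OF xi])
    show "e (inv_into (Field w1) e x) = x" by (rule f_inv_into_f[OF xi])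
  qed
next
  fix \<alpha> assume a: "\<alpha> \<in> Field w1"
  show "inv_into (Field w1) e (e \<alpha>) = \<alpha> \<and> e \<alpha> \<in> T"
  proof
    have "inj_on e (Field w1)" using e unfolding bij_betw_def by blast
    thus "inv_into (Field w1) e (e \<alpha>) = \<alpha>" using inv_into_f_f a by metis
    show "e \<alpha> \<in> T" using e a unfolding bij_betw_def by blast
  qed
qed

context fixes C :: "'h set set"
  assumes Cclub: "club_ctbl UNIV C" and Cdis: "C \<inter> N_set UNIV node code B = {}"
begin

lemma chain_nonstat: "nonstationary_over T lt B"
proof -
  obtain e where e: "bij_betw e (Field w1) T" using ex_e by blast
  define idx where "idx = inv_into (Field w1) e"
  have idx1: "x \<in> T \<Longrightarrow> idx x \<in> Field w1 \<and> e (idx x) = x" for x using e_props(1)[OF e] unfolding idx_def .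
  obtain Nf where Nf: "\<forall>\<alpha>\<in>Field w1. Nf \<alpha> \<in> C \<and> Fcl (Nf \<alpha>) \<and> node (e \<alpha>) \<in> Nf \<alpha> \<and> (\<forall>\<gamma>. lw \<gamma> \<alpha> \<longrightarrow> Nf \<gamma> \<subseteq> Nf \<alpha>)"
    using chain_ex[OF Cclub Cdis, of e] by blast
  define NN where "NN = Nf ` Field w1"
  have NN_C: "M \<in> C" "Fcl M" if "M \<in> NN" for M using that Nf unfolding NN_def by auto
  have NN_chain: "M \<subseteq> M' \<or> M' \<subseteq> M" if MM: "M \<in> NN" "M' \<in> NN" for M M'
  proof -
    obtain \<alpha> \<beta> where ab: "\<alpha> \<in> Field w1" "\<beta> \<in> Field w1" "M = Nf \<alpha>" "M' = Nf \<beta>"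
      using MM unfolding NN_def by blast
    show ?thesis
    proof (cases "\<alpha> = \<beta>")
      case True thus ?thesis using ab by simp
    next
      case False
      hence "lw \<alpha> \<beta> \<or> lw \<beta> \<alpha>" using w1_total[OF ab(1,2)] by blast
      thus ?thesis using Nf ab by blast
    qed
  qed
  have P1: "\<exists>M\<in>NN. code b \<in> M" if b: "b \<in> B" for b
  proof -
    have bT: "b \<subseteq> T" using br_sub[OF bB[OF b]] .
    have c1: "countable (idx ` b)" using br_countable[OF bB[OF b]] by simp
    have c2: "idx ` b \<subseteq> Field w1" using idx1 bT by blast
    obtain u where u: "u \<in> Field w1" "\<forall>y\<in>idx ` b. lw y u" using w1_bound[OF c1 c2] by blast
    have "node ` b \<subseteq> Nf u"
    proof
      fix z assume "z \<in> node ` b"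
      then obtain x where x: "x \<in> b" "z = node x" by blast
      have ix: "idx x \<in> Field w1" "e (idx x) = x" using idx1 x(1) bT by auto
      have "node (e (idx x)) \<in> Nf (idx x)" using Nf ix(1) by blast
      hence "node x \<in> Nf (idx x)" using ix(2) by simp
      moreover have "lw (idx x) u" using u(2) x(1) by blast
      hence "Nf (idx x) \<subseteq> Nf u" using Nf u(1) by blast
      ultimately show "z \<in> Nf u" using x(2) by blast
    qed
    moreover have "Nf u \<in> C" using Nf u(1) by blast
    ultimately have "code b \<in> Nf u" using C_code[OF Cclub Cdis _ b] by blast
    thus ?thesis using u(1) unfolding NN_def by blast
  qed
  define \<rho> where "\<rho> b = \<Union>{M\<in>NN. code b \<notin> M}" for b
  define D where "D Q = {x\<in>T. node x \<in> Q}" for Q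
  show ?thesis
  proof (rule sep[of B \<rho> "(\<subset>)" D])
    show "\<forall>b\<in>B. cofinal_branch T lt b" using branches .
  next
    show "\<forall>b\<in>B. \<forall>b'\<in>B. \<rho> b \<noteq> \<rho> b' \<longrightarrow> \<rho> b \<subset> \<rho> b' \<or> \<rho> b' \<subset> \<rho> b"
    proof (intro ballI impI)
      fix b b' assume "b \<in> B" "b' \<in> B" "\<rho> b \<noteq> \<rho> b'"
      have "(\<forall>M\<in>NN. code b \<notin> M \<longrightarrow> code b' \<notin> M) \<or> (\<forall>M\<in>NN. code b' \<notin> M \<longrightarrow> code b \<notin> M)"
      proof (rule ccontr)
        assume "\<not> ?thesis"
        then obtain M1 M2 where "M1 \<in> NN" "code b \<notin> M1" "code b' \<in> M1"
          "M2 \<in> NN" "code b' \<notin> M2" "code b \<in> M2" by blast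
        thus False using NN_chain[of M1 M2] by blast
      qed
      hence "{M\<in>NN. code b \<notin> M} \<subseteq> {M\<in>NN. code b' \<notin> M} \<or> {M\<in>NN. code b' \<notin> M} \<subseteq> {M\<in>NN. code b \<notin> M}"
        by blast
      hence "\<rho> b \<subseteq> \<rho> b' \<or> \<rho> b' \<subseteq> \<rho> b"
      proof
        assume "{M\<in>NN. code b \<notin> M} \<subseteq> {M\<in>NN. code b' \<notin> M}"
        hence "\<rho> b \<subseteq> \<rho> b'" unfolding \<rho>_def by (rule Union_mono)
        thus ?thesis by (rule disjI1)
      next
        assume "{M\<in>NN. code b' \<notin> M} \<subseteq> {M\<in>NN. code b \<notin> M}"
        hence "\<rho> b' \<subseteq> \<rho> b" unfolding \<rho>_def by (rule Union_mono)
        thus ?thesis by (rule disjI2)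
      qed
      thus "\<rho> b \<subset> \<rho> b' \<or> \<rho> b' \<subset> \<rho> b" using \<open>\<rho> b \<noteq> \<rho> b'\<close> by blast
    qed
  next
    show "\<forall>i. countable {b\<in>B. \<rho> b = i}"
    proof
      fix i
      show "countable {b\<in>B. \<rho> b = i}"
      proof (cases "{b\<in>B. \<rho> b = i} = {}")
        case True
        have "{b\<in>B. \<rho> b = i} = {}" using True .
        thus ?thesis by (simp only: countable_empty)
      next
        case False
        then obtain b0 where b0: "b0 \<in> B" "\<rho> b0 = i" by blast
        obtain M0 where M0: "M0 \<in> NN" "code b0 \<in> M0" using P1[OF b0(1)] by blast
        have sub: "{b\<in>B. \<rho> b = i} \<subseteq> {b\<in>B. code b \<in> M0}"
        proof
          fix b assume b: "b \<in> {b\<in>B. \<rho> b = i}"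
          show "b \<in> {b\<in>B. code b \<in> M0}"
          proof (rule ccontr)
            assume "b \<notin> {b\<in>B. code b \<in> M0}"
            hence "code b \<notin> M0" using b by blast
            hence "M0 \<subseteq> \<rho> b" unfolding \<rho>_def using M0(1) by blast
            hence "code b0 \<in> \<rho> b0" using b b0 M0(2) by auto
            thus False unfolding \<rho>_def by blast
          qed
        qed
        have i1: "inj_on code {b\<in>B. code b \<in> M0}" by (rule inj_on_subset[OF code_inj]) blast
        have s0: "code ` {b\<in>B. code b \<in> M0} \<subseteq> M0" by blast
        have "countable M0" using C_ctbl[OF Cclub Cdis NN_C(1)[OF M0(1)]] by blast
        hence "countable (code ` {b\<in>B. code b \<in> M0})" using countable_subset[OF s0] by blast
        hence "countable {b\<in>B. code b \<in> M0}" using countable_image_inj_on[OF _ i1] by blast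
        thus ?thesis using countable_subset[OF sub] by blast
      qed
    qed
  next
    show "\<forall>b\<in>B. infinite (b - D (\<rho> b))"
    proof
      fix b assume b: "b \<in> B"
      have br: "cofinal_branch T lt b" using bB[OF b] .
      have bT: "b \<subseteq> T" using br_sub[OF br] .
      let ?P = "b \<inter> D (\<rho> b)"
      have dc: "\<forall>x\<in>?P. \<forall>y\<in>b. lt y x \<longrightarrow> y \<in> ?P"
      proof (intro ballI impI)
        fix x y assume x: "x \<in> ?P" and y: "y \<in> b" "lt y x"
        have "node x \<in> \<rho> b" using x unfolding D_def by blast
        then obtain M where M: "M \<in> NN" "code b \<notin> M" "node x \<in> M" unfolding \<rho>_def by blast
        have "x \<in> T" "y \<in> T" using x y bT by auto
        hence "node y \<in> M" using NN_C(2)[OF M(1)] M(3) y(2) unfolding Fcl_def by blast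
        hence "node y \<in> \<rho> b" unfolding \<rho>_def using M by blast
        thus "y \<in> ?P" using y bT unfolding D_def by blast
      qed
      have ne: "?P \<noteq> b"
      proof
        assume Pb: "?P = b"
        define Mx where "Mx x = (SOME M. M \<in> NN \<and> code b \<notin> M \<and> node x \<in> M)" for x
        have Mx: "Mx x \<in> NN \<and> code b \<notin> Mx x \<and> node x \<in> Mx x" if x: "x \<in> b" for x
        proof -
          have "node x \<in> \<rho> b" using x Pb unfolding D_def by blast
          hence "\<exists>M. M \<in> NN \<and> code b \<notin> M \<and> node x \<in> M" unfolding \<rho>_def by blast
          thus ?thesis unfolding Mx_def by (rule someI_ex)
        qed
        let ?ch = "Mx ` b"
        have "?ch \<subseteq> C" using Mx NN_C by blast
        moreover have "?ch \<noteq> {}" using br_infinite[OF br] by auto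
        moreover have "countable ?ch" using br_countable[OF br] by simp
        moreover have "\<forall>u\<in>?ch. \<forall>v\<in>?ch. u \<subseteq> v \<or> v \<subseteq> u" using Mx NN_chain by blast
        ultimately have UC: "\<Union>?ch \<in> C" using C_chain[OF Cclub Cdis] by blast
        have "node ` b \<subseteq> \<Union>?ch" using Mx by blast
        hence "code b \<in> \<Union>?ch" using C_code[OF Cclub Cdis UC b] by blast
        thus False using Mx by blast
      qed
      have "finite ?P" using br_downset_finite[OF br _ dc ne] by blast
      hence "infinite (b - ?P)" using Diff_infinite_finite[OF _ br_infinite[OF br]] by blast
      moreover have "b - ?P = b - D (\<rho> b)" by blast
      ultimately show "infinite (b - D (\<rho> b))" by simp
    qed
  next
    show "\<forall>b\<in>B. \<forall>b'\<in>B. \<rho> b \<subset> \<rho> b' \<longrightarrow> b \<subseteq> D (\<rho> b')"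
    proof (intro ballI impI)
      fix b b' assume b: "b \<in> B" and b': "b' \<in> B" and lt: "\<rho> b \<subset> \<rho> b'"
      then obtain z where "z \<in> \<rho> b'" "z \<notin> \<rho> b" by blast
      then obtain M where M: "M \<in> NN" "code b' \<notin> M" "z \<in> M" unfolding \<rho>_def by blast
      have "code b \<in> M"
      proof (rule ccontr)
        assume "code b \<notin> M"
        hence "M \<subseteq> \<rho> b" using M(1) unfolding \<rho>_def by blast
        thus False using M(3) \<open>z \<notin> \<rho> b\<close> by blast
      qed
      hence "node ` b \<subseteq> M" using NN_C(2)[OF M(1)] b unfolding Fcl_def by blast
      hence "node ` b \<subseteq> \<rho> b'" using M(1,2) unfolding \<rho>_def by blast
      thus "b \<subseteq> D (\<rho> b')" using br_sub[OF bB[OF b]] unfolding D_def by blast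
    qed
  qed
qed

end

lemma notN_nonstat:
  assumes "\<not> stationary_ctbl UNIV (N_set UNIV node code B)"
  shows "nonstationary_over T lt B"
proof -
  have "N_set UNIV node code B \<subseteq> ctbl_subsets UNIV" unfolding N_set_def by blast
  then obtain C where "club_ctbl UNIV C" "C \<inter> N_set UNIV node code B = {}"
    using assms unfolding stationary_ctbl_def by blast
  thus ?thesis using chain_nonstat by blast
qed

end

context L4 begin

lemma f_unique:
  assumes f1: "\<forall>b\<in>B. f b \<in> b" and f2: "\<forall>b\<in>B. \<forall>b'\<in>B. b \<noteq> b' \<longrightarrow> f b \<notin> b' \<or> f b' \<notin> b"
    and b: "b \<in> B" "b' \<in> B" and eq: "f b = f b'"
  shows "b = b'"
proof (rule ccontr)
  assume "b \<noteq> b'"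
  hence "f b \<notin> b' \<or> f b' \<notin> b" using f2 b by blast
  moreover have "f b \<in> b" "f b' \<in> b'" using f1 b by auto
  ultimately show False using eq by simp
qed

lemma Bc_stat:
  assumes H: "\<forall>e. bij_betw e (Field w1) T \<longrightarrow> w1_stationary (E_set e B)"
  shows "stationary_over T lt B"
  unfolding stationary_over_def
proof
  assume "nonstationary_over T lt B"
  then obtain f where f1: "\<forall>b\<in>B. f b \<in> b" and f2: "\<forall>b\<in>B. \<forall>b'\<in>B. b \<noteq> b' \<longrightarrow> f b \<notin> b' \<or> f b' \<notin> b"
    unfolding nonstationary_over_def by blast
  obtain e where e: "bij_betw e (Field w1) T" using ex_e by blast
  define idx where "idx = inv_into (Field w1) e"
  have idx1: "x \<in> T \<Longrightarrow> idx x \<in> Field w1 \<and> e (idx x) = x" for x using e_props(1)[OF e] unfolding idx_def .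
  have idx2: "\<alpha> \<in> Field w1 \<Longrightarrow> idx (e \<alpha>) = \<alpha> \<and> e \<alpha> \<in> T" for \<alpha> using e_props(2)[OF e] unfolding idx_def .
  define g where "g x = (SOME b. b \<in> B \<and> f b = x)" for x
  have g: "g (f b) = b" if b: "b \<in> B" for b
  proof -
    have "\<exists>b'. b' \<in> B \<and> f b' = f b" using b by blast
    hence "g (f b) \<in> B \<and> f (g (f b)) = f b" unfolding g_def by (rule someI_ex)
    thus ?thesis using f_unique[OF f1 f2] b by blast
  qed
  define A where "A \<beta> = (if \<exists>b\<in>B. f b = e \<beta> then idx ` g (e \<beta>) else {}) \<union> idx ` preds T lt (e \<beta>)" for \<beta>
  define h where "h \<beta> = (SOME u. u \<in> Field w1 \<and> (\<forall>y\<in>A \<beta>. lw y u))" for \<beta>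
  have hp: "h \<beta> \<in> Field w1 \<and> (\<forall>y\<in>A \<beta>. lw y (h \<beta>))" if \<beta>: "\<beta> \<in> Field w1" for \<beta>
  proof -
    have eT: "e \<beta> \<in> T" using idx2[OF \<beta>] by blast
    have c1: "countable (A \<beta>) \<and> A \<beta> \<subseteq> Field w1"
    proof (cases "\<exists>b\<in>B. f b = e \<beta>")
      case True
      then obtain b where b: "b \<in> B" "f b = e \<beta>" by blast
      hence gb: "g (e \<beta>) = b" using g by metis
      have bT: "b \<subseteq> T" using br_sub[OF bB[OF b(1)]] .
      have "countable (idx ` b)" using br_countable[OF bB[OF b(1)]] by simp
      moreover have "countable (idx ` preds T lt (e \<beta>))" using pfin[OF eT] by (simp add: countable_finite)
      moreover have "idx ` b \<subseteq> Field w1" using idx1 bT by blast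
      moreover have "idx ` preds T lt (e \<beta>) \<subseteq> Field w1" using idx1 unfolding preds_def by blast
      ultimately show ?thesis unfolding A_def using True gb by simp
    next
      case False
      have "countable (idx ` preds T lt (e \<beta>))" using pfin[OF eT] by (simp add: countable_finite)
      moreover have "idx ` preds T lt (e \<beta>) \<subseteq> Field w1" using idx1 unfolding preds_def by blast
      ultimately show ?thesis unfolding A_def using False by simp
    qed
    hence "\<exists>u. u \<in> Field w1 \<and> (\<forall>y\<in>A \<beta>. lw y u)" using w1_bound by blast
    thus ?thesis unfolding h_def by (rule someI_ex)
  qed
  have hF: "\<forall>\<beta>\<in>Field w1. h \<beta> \<in> Field w1" using hp by blast
  let ?H = "{\<gamma>\<in>Field w1. \<forall>\<beta>. lw \<beta> \<gamma> \<longrightarrow> lw (h \<beta>) \<gamma>}"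
  have club: "w1_club ?H" using club_closure[OF hF] .
  have "?H \<inter> E_set e B = {}"
  proof (rule ccontr)
    assume "?H \<inter> E_set e B \<noteq> {}"
    then obtain s b where sH: "s \<in> ?H" and b: "b \<in> B" and sup: "w1_sup (idx ` b) s"
      unfolding E_set_def idx_def by blast
    have sF: "s \<in> Field w1" using w1_sup_Field[OF sup] .
    have hs: "lw \<beta> s \<Longrightarrow> lw (h \<beta>) s" for \<beta> using sH by blast
    have br: "cofinal_branch T lt b" using bB[OF b] .
    have bT: "b \<subseteq> T" using br_sub[OF br] .
    define x where "x = f b"
    have xb: "x \<in> b" using f1 b unfolding x_def by blast
    have xT: "x \<in> T" using xb bT by blast
    define \<beta> where "\<beta> = idx x"
    have \<beta>F: "\<beta> \<in> Field w1" and e\<beta>: "e \<beta> = x" using idx1[OF xT] unfolding \<beta>_def by auto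
    have \<beta>s: "(\<beta>, s) \<in> w1" using w1_sup_le[OF sup] xb unfolding \<beta>_def by blast
    show False
    proof (cases "\<beta> = s")
      case False
      hence "lw (h \<beta>) s" using hs \<beta>s by blast
      have ex: "\<exists>b'\<in>B. f b' = e \<beta>" using b e\<beta> unfolding x_def by (intro bexI[of _ b]) simp_all
      have gb: "g (e \<beta>) = b" using g[OF b] e\<beta> unfolding x_def by simp
      have "\<forall>y\<in>idx ` b. (y, h \<beta>) \<in> w1"
      proof
        fix y assume "y \<in> idx ` b"
        hence "y \<in> A \<beta>" unfolding A_def using ex gb by simp
        thus "(y, h \<beta>) \<in> w1" using hp[OF \<beta>F] by blast
      qed
      hence "(s, h \<beta>) \<in> w1" using w1_sup_least[OF sup] hp[OF \<beta>F] by blast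
      thus False using \<open>lw (h \<beta>) s\<close> w1_antisym by blast
    next
      case True
      obtain y where y: "y \<in> b" "lt x y" using br_above[OF br xb] by blast
      have yT: "y \<in> T" using y bT by blast
      have iy: "idx y \<in> Field w1" "e (idx y) = y" using idx1[OF yT] by auto
      have iys: "(idx y, s) \<in> w1" using w1_sup_le[OF sup] y(1) by blast
      have "idx y \<noteq> s"
      proof
        assume "idx y = s"
        hence "y = x" using iy(2) e\<beta> True by simp
        thus False using y(2) irr[OF xT] by simp
      qed
      hence l1: "lw (h (idx y)) s" using hs iys by blast
      have "x \<in> preds T lt (e (idx y))" using iy(2) y(2) xT unfolding preds_def by simp
      hence "s \<in> A (idx y)" unfolding A_def using True \<beta>_def by blast
      hence "lw s (h (idx y))" using hp[OF iy(1)] by blast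
      thus False using l1 w1_antisym by blast
    qed
  qed
  moreover have "w1_stationary (E_set e B)" using H e by blast
  ultimately show False unfolding w1_stationary_def using club by blast
qed

end

context L4 begin

lemma notA_notBc:
  assumes nA: "\<not> (\<exists>S. cantor_subtree T B S)"
    and nB: "\<not> (\<forall>e. bij_betw e (Field w1) T \<longrightarrow> w1_stationary (E_set e B))"
  shows "nonstationary_over T lt B"
proof -
  obtain e where e: "bij_betw e (Field w1) T" and ns: "\<not> w1_stationary (E_set e B)" using nB by blast
  have "E_set e B \<subseteq> Field w1" unfolding E_set_def by blast
  then obtain C where C: "w1_club C" and CE: "C \<inter> E_set e B = {}" using ns unfolding w1_stationary_def by blast
  define idx where "idx = inv_into (Field w1) e"
  have idx1: "x \<in> T \<Longrightarrow> idx x \<in> Field w1 \<and> e (idx x) = x" for x using e_props(1)[OF e] unfolding idx_def .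
  have idx2: "\<alpha> \<in> Field w1 \<Longrightarrow> idx (e \<alpha>) = \<alpha> \<and> e \<alpha> \<in> T" for \<alpha> using e_props(2)[OF e] unfolding idx_def .
  have idx_inj: "inj_on idx T"
  proof (rule inj_onI)
    fix x y assume "x \<in> T" "y \<in> T" "idx x = idx y"
    thus "x = y" using idx1 by metis
  qed
  define hd where "hd \<beta> = (SOME u. u \<in> Field w1 \<and> (\<forall>y\<in>idx ` preds T lt (e \<beta>). lw y u))" for \<beta>
  have hp: "hd \<beta> \<in> Field w1 \<and> (\<forall>y\<in>idx ` preds T lt (e \<beta>). lw y (hd \<beta>))" if \<beta>: "\<beta> \<in> Field w1" for \<beta>
  proof -
    have eT: "e \<beta> \<in> T" using idx2[OF \<beta>] by blast
    have c1: "countable (idx ` preds T lt (e \<beta>))" using pfin[OF eT] by (simp add: countable_finite)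
    have c2: "idx ` preds T lt (e \<beta>) \<subseteq> Field w1" using idx1 unfolding preds_def by blast
    have "\<exists>u. u \<in> Field w1 \<and> (\<forall>y\<in>idx ` preds T lt (e \<beta>). lw y u)" using w1_bound[OF c1 c2] by blast
    thus ?thesis unfolding hd_def by (rule someI_ex)
  qed
  have hF: "\<forall>\<beta>\<in>Field w1. hd \<beta> \<in> Field w1" using hp by blast
  define C' where "C' = C \<inter> {\<gamma>\<in>Field w1. \<forall>\<beta>. lw \<beta> \<gamma> \<longrightarrow> lw (hd \<beta>) \<gamma>}"
  have C'club: "w1_club C'" unfolding C'_def using club_Int[OF C club_closure[OF hF]] .
  have C'C: "C' \<subseteq> C" unfolding C'_def by blast
  have C'F: "C' \<subseteq> Field w1" using club_sub[OF C'club] .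
  define Tg where "Tg \<gamma> = {x\<in>T. lw (idx x) \<gamma>}" for \<gamma>
  have down: "y \<in> Tg \<gamma>" if "\<gamma> \<in> C'" "x \<in> Tg \<gamma>" "y \<in> T" "lt y x" for \<gamma> x y
  proof -
    have xT: "x \<in> T" and lx: "lw (idx x) \<gamma>" using that(2) unfolding Tg_def by auto
    have ix: "idx x \<in> Field w1" "e (idx x) = x" using idx1[OF xT] by auto
    have "lw (hd (idx x)) \<gamma>" using that(1) lx unfolding C'_def by blast
    moreover have "idx y \<in> idx ` preds T lt (e (idx x))" using that(3,4) ix(2) unfolding preds_def by simp
    hence "lw (idx y) (hd (idx x))" using hp[OF ix(1)] by blast
    ultimately have "lw (idx y) \<gamma>" using w1_lt_le_trans by blast
    thus ?thesis using that(3) unfolding Tg_def by blast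
  qed
  have Tg_count: "countable (Tg \<gamma>)" if "\<gamma> \<in> Field w1" for \<gamma>
  proof -
    have "idx ` Tg \<gamma> \<subseteq> {\<beta>. lw \<beta> \<gamma>}" unfolding Tg_def by blast
    hence "countable (idx ` Tg \<gamma>)" using countable_subset[OF _ w1_underS_countable[OF that]] by blast
    moreover have "inj_on idx (Tg \<gamma>)" by (rule inj_on_subset[OF idx_inj]) (unfold Tg_def, blast)
    ultimately show ?thesis using countable_image_inj_on by blast
  qed
  have Tg_sub: "Tg \<gamma> \<subseteq> T" for \<gamma> unfolding Tg_def by blast
  have ex\<rho>: "\<exists>\<gamma>. \<gamma> \<in> C' \<and> b \<subseteq> Tg \<gamma> \<and> (\<forall>\<delta>\<in>C'. b \<subseteq> Tg \<delta> \<longrightarrow> (\<gamma>,\<delta>) \<in> w1)" if b: "b \<in> B" for b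
  proof -
    have br: "cofinal_branch T lt b" using bB[OF b] .
    have bT: "b \<subseteq> T" using br_sub[OF br] .
    have c1: "countable (idx ` b)" using br_countable[OF br] by simp
    have c2: "idx ` b \<subseteq> Field w1" using idx1 bT by blast
    obtain u where u: "u \<in> Field w1" "\<forall>y\<in>idx ` b. lw y u" using w1_bound[OF c1 c2] by blast
    obtain \<gamma>0 where g0: "\<gamma>0 \<in> C'" "lw u \<gamma>0" using club_unb[OF C'club u(1)] by blast
    have "b \<subseteq> Tg \<gamma>0"
    proof
      fix x assume x: "x \<in> b"
      have "lw (idx x) u" using u(2) x by blast
      hence "lw (idx x) \<gamma>0" using g0(2) w1_lt_le_trans by blast
      thus "x \<in> Tg \<gamma>0" using x bT unfolding Tg_def by blast
    qed
    moreover have "\<gamma>0 \<in> Field w1" using g0(1) C'F by blast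
    ultimately obtain \<gamma> where "\<gamma> \<in> Field w1" "\<gamma> \<in> C' \<and> b \<subseteq> Tg \<gamma>"
      "\<forall>d\<in>Field w1. d \<in> C' \<and> b \<subseteq> Tg d \<longrightarrow> (\<gamma>, d) \<in> w1"
      using w1_min[of "\<lambda>\<gamma>. \<gamma> \<in> C' \<and> b \<subseteq> Tg \<gamma>" \<gamma>0] g0(1) by blast
    thus ?thesis using C'F by blast
  qed
  define \<rho> where "\<rho> b = (SOME \<gamma>. \<gamma> \<in> C' \<and> b \<subseteq> Tg \<gamma> \<and> (\<forall>\<delta>\<in>C'. b \<subseteq> Tg \<delta> \<longrightarrow> (\<gamma>,\<delta>) \<in> w1))" for b
  have \<rho>: "\<rho> b \<in> C' \<and> b \<subseteq> Tg (\<rho> b) \<and> (\<forall>\<delta>\<in>C'. b \<subseteq> Tg \<delta> \<longrightarrow> (\<rho> b,\<delta>) \<in> w1)" if b: "b \<in> B" for b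
    unfolding \<rho>_def using someI_ex[OF ex\<rho>[OF b]] .
  define D where "D \<gamma> = {x\<in>T. \<exists>\<delta>\<in>C'. lw \<delta> \<gamma> \<and> x \<in> Tg \<delta>}" for \<gamma>
  show ?thesis
  proof (rule sep[of B \<rho> lw D])
    show "\<forall>b\<in>B. cofinal_branch T lt b" using branches .
  next
    show "\<forall>b\<in>B. \<forall>b'\<in>B. \<rho> b \<noteq> \<rho> b' \<longrightarrow> lw (\<rho> b) (\<rho> b') \<or> lw (\<rho> b') (\<rho> b)"
    proof (intro ballI impI)
      fix b b' assume b: "b \<in> B" "b' \<in> B" "\<rho> b \<noteq> \<rho> b'"
      have "\<rho> b \<in> Field w1" "\<rho> b' \<in> Field w1" using \<rho> b C'F by blast+
      thus "lw (\<rho> b) (\<rho> b') \<or> lw (\<rho> b') (\<rho> b)" using w1_total b(3) by blast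
    qed
  next
    show "\<forall>i. countable {b\<in>B. \<rho> b = i}"
    proof
      fix i
      show "countable {b\<in>B. \<rho> b = i}"
      proof (cases "i \<in> Field w1")
        case False
        have "{b\<in>B. \<rho> b = i} = {}" using \<rho> C'F False by blast
        thus ?thesis by (simp only: countable_empty)
      next
        case True
        have sub: "{b\<in>B. \<rho> b = i} \<subseteq> closure_B B (Tg i)"
        proof
          fix b assume b: "b \<in> {b\<in>B. \<rho> b = i}"
          hence bB': "b \<in> B" and "b \<subseteq> Tg i" using \<rho> by auto
          hence "b \<inter> Tg i = b" by blast
          hence "infinite (b \<inter> Tg i)" using br_infinite[OF bB[OF bB']] by simp
          thus "b \<in> closure_B B (Tg i)" unfolding closure_B_def using bB' by blast
        qed
        have "\<not> cantor_subtree T B (Tg i)" using nA by blast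
        hence "countable (closure_B B (Tg i))" unfolding cantor_subtree_def using Tg_sub Tg_count[OF True] by blast
        thus ?thesis using countable_subset[OF sub] by blast
      qed
    qed
  next
    show "\<forall>b\<in>B. infinite (b - D (\<rho> b))"
    proof
      fix b assume b: "b \<in> B"
      have br: "cofinal_branch T lt b" using bB[OF b] .
      have bT: "b \<subseteq> T" using br_sub[OF br] .
      define \<gamma> where "\<gamma> = \<rho> b"
      have g: "\<gamma> \<in> C'" "b \<subseteq> Tg \<gamma>" "\<forall>\<delta>\<in>C'. b \<subseteq> Tg \<delta> \<longrightarrow> (\<gamma>,\<delta>) \<in> w1" using \<rho>[OF b] unfolding \<gamma>_def by auto
      have gF: "\<gamma> \<in> Field w1" using g(1) C'F by blast
      let ?P = "b \<inter> D \<gamma>"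
      have dc: "\<forall>x\<in>?P. \<forall>y\<in>b. lt y x \<longrightarrow> y \<in> ?P"
      proof (intro ballI impI)
        fix x y assume x: "x \<in> ?P" and y: "y \<in> b" "lt y x"
        then obtain \<delta> where d: "\<delta> \<in> C'" "lw \<delta> \<gamma>" "x \<in> Tg \<delta>" unfolding D_def by blast
        have yT: "y \<in> T" using y bT by blast
        have "y \<in> Tg \<delta>" using down[OF d(1) d(3) yT y(2)] .
        thus "y \<in> ?P" using y(1) yT d unfolding D_def by blast
      qed
      have ne: "?P \<noteq> b"
      proof
        assume Pb: "?P = b"
        let ?A = "{\<delta>\<in>C'. lw \<delta> \<gamma>}"
        obtain x0 where x0: "x0 \<in> b" using br_infinite[OF br] by (metis finite.emptyI ex_in_conv)
        have "x0 \<in> D \<gamma>" using x0 Pb by blast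
        hence Ane: "?A \<noteq> {}" unfolding D_def by blast
        have ib: "idx ` b \<subseteq> Field w1" using idx1 bT by blast
        have "\<forall>y\<in>idx ` b. (y, \<gamma>) \<in> w1" using g(2) unfolding Tg_def by blast
        then obtain s where sup: "w1_sup (idx ` b) s" using w1_sup_ex[OF ib gF] by blast
        have sF: "s \<in> Field w1" using w1_sup_Field[OF sup] .
        have "w1_sup ?A s" unfolding w1_sup_def
        proof (intro conjI ballI impI sF)
          fix \<delta> assume d: "\<delta> \<in> ?A"
          have dF: "\<delta> \<in> Field w1" using d C'F by blast
          have "\<not> b \<subseteq> Tg \<delta>"
          proof
            assume "b \<subseteq> Tg \<delta>"
            hence "(\<gamma>, \<delta>) \<in> w1" using g(3) d by blast
            thus False using d w1_antisym by blast
          qed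
          then obtain x where x: "x \<in> b" "\<not> lw (idx x) \<delta>" using bT unfolding Tg_def by blast
          have ixF: "idx x \<in> Field w1" using x(1) ib by blast
          have "(\<delta>, idx x) \<in> w1" using w1_not_le[OF dF ixF] x(2) w1_total[OF dF ixF] by blast
          moreover have "(idx x, s) \<in> w1" using w1_sup_le[OF sup] x(1) by blast
          ultimately show "(\<delta>, s) \<in> w1" using w1_trans by blast
        next
          fix c assume c: "c \<in> Field w1" "\<forall>\<delta>\<in>?A. (\<delta>, c) \<in> w1"
          have "\<forall>y\<in>idx ` b. (y, c) \<in> w1"
          proof
            fix y assume "y \<in> idx ` b"
            then obtain x where x: "x \<in> b" "y = idx x" by blast
            have "x \<in> D \<gamma>" using x(1) Pb by blast
            then obtain \<delta> where d: "\<delta> \<in> C'" "lw \<delta> \<gamma>" "x \<in> Tg \<delta>" unfolding D_def by blast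
            have "lw (idx x) \<delta>" using d(3) unfolding Tg_def by blast
            moreover have "(\<delta>, c) \<in> w1" using c(2) d(1,2) by blast
            ultimately show "(y, c) \<in> w1" using x(2) w1_lt_le_trans by blast
          qed
          thus "(s, c) \<in> w1" using w1_sup_least[OF sup c(1)] by blast
        qed
        moreover have "?A \<subseteq> C'" by blast
        ultimately have "s \<in> C'" using club_closed[OF C'club _ Ane] by blast
        hence "s \<in> C" using C'C by blast
        moreover have "s \<in> E_set e B" unfolding E_set_def using sF b sup unfolding idx_def by blast
        ultimately show False using CE by blast
      qed
      have "finite ?P" using br_downset_finite[OF br _ dc ne] by blast
      hence "infinite (b - ?P)" using Diff_infinite_finite[OF _ br_infinite[OF br]] by blast
      moreover have "b - ?P = b - D \<gamma>" by blast
      ultimately show "infinite (b - D (\<rho> b))" unfolding \<gamma>_def by simp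
    qed
  next
    show "\<forall>b\<in>B. \<forall>b'\<in>B. lw (\<rho> b) (\<rho> b') \<longrightarrow> b \<subseteq> D (\<rho> b')"
    proof (intro ballI impI subsetI)
      fix b b' x assume b: "b \<in> B" and b': "b' \<in> B" and l: "lw (\<rho> b) (\<rho> b')" and x: "x \<in> b"
      have "\<rho> b \<in> C'" "b \<subseteq> Tg (\<rho> b)" using \<rho>[OF b] by auto
      thus "x \<in> D (\<rho> b')" using x l Tg_sub unfolding D_def by blast
    qed
  qed
qed

end

theorem lemma4:
  fixes T :: "'a set" and lt :: "'a \<Rightarrow> 'a \<Rightarrow> bool" and B :: "'a set set"
    and node :: "'a \<Rightarrow> 'h" and code :: "'a set \<Rightarrow> 'h"
  assumes tree: "is_tree T lt"
    and height: "height_omega T lt"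
    and size: "ordIso2 (card_of T) (cardSuc natLeq)"
    and branches: "\<forall>b\<in>B. cofinal_branch T lt b"
    and node_inj: "inj_on node T"
    and code_inj: "inj_on code B"
    and disj: "node ` T \<inter> code ` B = {}"
  shows "(stationary_over T lt B \<longleftrightarrow>
            ((\<exists>S. cantor_subtree T B S) \<or>
             (\<forall>e. bij_betw e (Field (cardSuc natLeq)) T \<longrightarrow> w1_stationary (E_set e B))))
       \<and> (stationary_over T lt B \<longleftrightarrow> stationary_ctbl UNIV (N_set UNIV node code B))"
proof -
  interpret L: L4 T lt B node code
    by (unfold_locales) (fact tree height size branches node_inj code_inj disj)+
  have 1: "stationary_over T lt B \<longleftrightarrow>
            ((\<exists>S. cantor_subtree T B S) \<or>
             (\<forall>e. bij_betw e (Field (cardSuc natLeq)) T \<longrightarrow> w1_stationary (E_set e B)))"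
  proof
    assume S1: "stationary_over T lt B"
    show "(\<exists>S. cantor_subtree T B S) \<or>
             (\<forall>e. bij_betw e (Field (cardSuc natLeq)) T \<longrightarrow> w1_stationary (E_set e B))"
    proof (rule ccontr)
      assume "\<not> ?thesis"
      hence "nonstationary_over T lt B" using L.notA_notBc by blast
      thus False using S1 unfolding stationary_over_def by blast
    qed
  next
    assume "(\<exists>S. cantor_subtree T B S) \<or>
             (\<forall>e. bij_betw e (Field (cardSuc natLeq)) T \<longrightarrow> w1_stationary (E_set e B))"
    thus "stationary_over T lt B" using L.cantor_stat L.Bc_stat by blast
  qed
  have 2: "stationary_over T lt B \<longleftrightarrow> stationary_ctbl UNIV (N_set UNIV node code B)"
  proof
    assume S1: "stationary_over T lt B"
    show "stationary_ctbl UNIV (N_set UNIV node code B)"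
    proof (rule ccontr)
      assume "\<not> ?thesis"
      hence "nonstationary_over T lt B" by (rule L.notN_nonstat)
      thus False using S1 unfolding stationary_over_def by blast
    qed
  next
    assume N3: "stationary_ctbl UNIV (N_set UNIV node code B)"
    show "stationary_over T lt B"
    proof (rule ccontr)
      assume "\<not> ?thesis"
      hence "nonstationary_over T lt B" unfolding stationary_over_def by blast
      thus False using L.nonstat_not_N N3 by blast
    qed
  qed
  show ?thesis using 1 2 by blast
qed

end
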